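(* Let $f,g:\mathbb{R}^2\to\mathbb{R}$ be Lipschitz continuous, let $(J,W)$ be a graphon and let $(\widetilde J,\widetilde W)$ be its twin-free quotient. Then \[ \{u\in L^1(J)\mid u_x=u_y \text{ for all twins } x,y\} \] is a closed, dynamically invariant subspace of $L^1(J)$ for $\mathcal D(J,W)$, and the dynamics of $\mathcal D(J,W)$ restricted to this subspace is isometric to the dynamics of $\mathcal D(\widetilde J,\widetilde W)$.
   Context: A graphon $(J,W)$ consists of a probability space $J=(\Omega,\mathcal A,\mu)$ and a symmetric measurable $W:\Omega\times\Omega\to[0,1]$. The graphon dynamical system $\mathcal D(J,W)$ is the flow on $L^1(J)$ given by $\dot u_x=f\big(u_x,\int_J W(x,y)g(u_x,u_y)\,d\mu(y)\big)$, where for each $t$ the equation holds for almost every $x$. Two vertices $x,y$ are twins if $W(x,\cdot)=W(y,\cdot)$ almost everywhere; this is an equivalence relation. The twin-free quotient $(\widetilde J,\widetilde W)$ is obtained by identifying all twins: $\widetilde{\mathcal A}\subseteq\mathcal A$ is the $\sigma$-algebra of sets that do not separate any pair of twins, $\widetilde J$ is the quotient space of twin classes with the $\sigma$-algebra and probability induced from $(\Omega,\widetilde{\mathcal A},\mu)$ via the projection $J\to\widetilde J$, and $\widetilde W$ is the conditional expectation of $W$ with respect to $\widetilde{\mathcal A}\times\widetilde{\mathcal A}$, viewed as a function on $\widetilde J\times\widetilde J$. Dynamically invariant means every trajectory starting in the set stays in it for all times. *)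

theory Defs
  imports "HOL-Probability.Probability"
begin

definition graphon :: "'a measure \<Rightarrow> ('a \<Rightarrow> 'a \<Rightarrow> real) \<Rightarrow> bool" where
  "graphon M W \<longleftrightarrow> prob_space M \<and>
     (\<lambda>p. W (fst p) (snd p)) \<in> borel_measurable (M \<Otimes>\<^sub>M M) \<and>
     (\<forall>x\<in>space M. \<forall>y\<in>space M. W x y = W y x \<and> 0 \<le> W x y \<and> W x y \<le> 1)"

definition l1dist :: "'a measure \<Rightarrow> ('a \<Rightarrow> real) \<Rightarrow> ('a \<Rightarrow> real) \<Rightarrow> real" where
  "l1dist M u v = (LINT x|M. \<bar>u x - v x\<bar>)"

definition gds_field :: "'a measure \<Rightarrow> ('a \<Rightarrow> 'a \<Rightarrow> real) \<Rightarrow> (real \<times> real \<Rightarrow> real)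
    \<Rightarrow> (real \<times> real \<Rightarrow> real) \<Rightarrow> ('a \<Rightarrow> real) \<Rightarrow> 'a \<Rightarrow> real" where
  "gds_field M W f g u x = f (u x, LINT y|M. W x y * g (u x, u y))"

definition gds_trajectory :: "'a measure \<Rightarrow> ('a \<Rightarrow> 'a \<Rightarrow> real) \<Rightarrow> (real \<times> real \<Rightarrow> real)
    \<Rightarrow> (real \<times> real \<Rightarrow> real) \<Rightarrow> (real \<Rightarrow> 'a \<Rightarrow> real) \<Rightarrow> bool" where
  "gds_trajectory M W f g u \<longleftrightarrow>
     (\<forall>t. integrable M (u t)) \<and>
     (\<forall>t. integrable M (gds_field M W f g (u t)) \<and>
          ((\<lambda>h. LINT x|M. \<bar>(u (t + h) x - u t x) / h - gds_field M W f g (u t) x\<bar>) \<longlongrightarrow> 0) (at 0))"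

definition twin :: "'a measure \<Rightarrow> ('a \<Rightarrow> 'a \<Rightarrow> real) \<Rightarrow> 'a \<Rightarrow> 'a \<Rightarrow> bool" where
  "twin M W x y \<longleftrightarrow> x \<in> space M \<and> y \<in> space M \<and> (AE z in M. W x z = W y z)"

definition twin_rel :: "'a measure \<Rightarrow> ('a \<Rightarrow> 'a \<Rightarrow> real) \<Rightarrow> ('a \<times> 'a) set" where
  "twin_rel M W = {(x, y). twin M W x y}"

definition twin_proj :: "'a measure \<Rightarrow> ('a \<Rightarrow> 'a \<Rightarrow> real) \<Rightarrow> 'a \<Rightarrow> 'a set" where
  "twin_proj M W x = twin_rel M W `` {x}"

definition twin_classes :: "'a measure \<Rightarrow> ('a \<Rightarrow> 'a \<Rightarrow> real) \<Rightarrow> 'a set set" where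
  "twin_classes M W = space M // twin_rel M W"

definition twinfree_sets :: "'a measure \<Rightarrow> ('a \<Rightarrow> 'a \<Rightarrow> real) \<Rightarrow> 'a set set" where
  "twinfree_sets M W = {A \<in> sets M. \<forall>x y. twin M W x y \<longrightarrow> (x \<in> A \<longleftrightarrow> y \<in> A)}"

definition twinfree_subalg :: "'a measure \<Rightarrow> ('a \<Rightarrow> 'a \<Rightarrow> real) \<Rightarrow> 'a measure" where
  "twinfree_subalg M W = sigma (space M) (twinfree_sets M W)"

definition twin_quot_space :: "'a measure \<Rightarrow> ('a \<Rightarrow> 'a \<Rightarrow> real) \<Rightarrow> 'a set measure" where
  "twin_quot_space M W = sigma (twin_classes M W)
     {B. B \<subseteq> twin_classes M W \<and> twin_proj M W -` B \<inter> space M \<in> twinfree_sets M W}"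

definition twinfree_J :: "'a measure \<Rightarrow> ('a \<Rightarrow> 'a \<Rightarrow> real) \<Rightarrow> 'a set measure" where
  "twinfree_J M W = distr (restr_to_subalg M (twinfree_subalg M W)) (twin_quot_space M W) (twin_proj M W)"

text \<open>The conditional expectation of W w.r.t. the product of the twin-free sigma-algebra,
  viewed as a function on pairs of twin classes (evaluated at chosen representatives).\<close>
definition twinfree_W :: "'a measure \<Rightarrow> ('a \<Rightarrow> 'a \<Rightarrow> real) \<Rightarrow> 'a set \<Rightarrow> 'a set \<Rightarrow> real" where
  "twinfree_W M W X Y =
     real_cond_exp (M \<Otimes>\<^sub>M M) (twinfree_subalg M W \<Otimes>\<^sub>M twinfree_subalg M W)
       (\<lambda>p. W (fst p) (snd p)) (SOME x. x \<in> X, SOME y. y \<in> Y)"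

definition twin_const_L1 :: "'a measure \<Rightarrow> ('a \<Rightarrow> 'a \<Rightarrow> real) \<Rightarrow> ('a \<Rightarrow> real) set" where
  "twin_const_L1 M W = {u. integrable M u \<and>
     (\<exists>u'. integrable M u' \<and> (AE x in M. u x = u' x) \<and>
           (\<forall>x y. twin M W x y \<longrightarrow> u' x = u' y))}"

definition l1_linear_subspace :: "'a measure \<Rightarrow> ('a \<Rightarrow> real) set \<Rightarrow> bool" where
  "l1_linear_subspace M S \<longleftrightarrow> (\<forall>u\<in>S. integrable M u) \<and> (\<lambda>x. 0) \<in> S \<and>
     (\<forall>u\<in>S. \<forall>v\<in>S. (\<lambda>x. u x + v x) \<in> S) \<and> (\<forall>u\<in>S. \<forall>c. (\<lambda>x. c * u x) \<in> S)"

definition l1_closed :: "'a measure \<Rightarrow> ('a \<Rightarrow> real) set \<Rightarrow> bool" where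
  "l1_closed M S \<longleftrightarrow> (\<forall>U u. (\<forall>n::nat. U n \<in> S) \<longrightarrow> integrable M u \<longrightarrow>
      (\<lambda>n. l1dist M (U n) u) \<longlonglongrightarrow> 0 \<longrightarrow> u \<in> S)"

definition gds_invariant :: "'a measure \<Rightarrow> ('a \<Rightarrow> 'a \<Rightarrow> real) \<Rightarrow> (real \<times> real \<Rightarrow> real)
    \<Rightarrow> (real \<times> real \<Rightarrow> real) \<Rightarrow> ('a \<Rightarrow> real) set \<Rightarrow> bool" where
  "gds_invariant M W f g S \<longleftrightarrow>
     (\<forall>u. gds_trajectory M W f g u \<longrightarrow> u 0 \<in> S \<longrightarrow> (\<forall>t. u t \<in> S))"

text \<open>The dynamics of D(J,W) restricted to S is isometric to the dynamics of D(J',W'):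
  there is an isometry from S onto L1(J') (modulo null functions) mapping trajectories
  in S exactly to trajectories of D(J',W').\<close>
definition gds_isometric :: "'a measure \<Rightarrow> ('a \<Rightarrow> 'a \<Rightarrow> real) \<Rightarrow> ('a \<Rightarrow> real) set
    \<Rightarrow> 'b measure \<Rightarrow> ('b \<Rightarrow> 'b \<Rightarrow> real) \<Rightarrow> (real \<times> real \<Rightarrow> real) \<Rightarrow> (real \<times> real \<Rightarrow> real) \<Rightarrow> bool" where
  "gds_isometric M W S M' W' f g \<longleftrightarrow>
     (\<exists>\<Phi> :: ('a \<Rightarrow> real) \<Rightarrow> ('b \<Rightarrow> real).
        (\<forall>u\<in>S. integrable M' (\<Phi> u)) \<and>
        (\<forall>u\<in>S. \<forall>v\<in>S. l1dist M' (\<Phi> u) (\<Phi> v) = l1dist M u v) \<and>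
        (\<forall>w. integrable M' w \<longrightarrow> (\<exists>u\<in>S. AE y in M'. \<Phi> u y = w y)) \<and>
        (\<forall>U. (\<forall>t. U t \<in> S) \<longrightarrow>
             (gds_trajectory M W f g U \<longleftrightarrow> gds_trajectory M' W' f g (\<lambda>t. \<Phi> (U t)))))"

end

theory Submission
  imports Defs
begin

lemma gron_fwd:
  fixes \<phi> :: "real \<Rightarrow> real"
  assumes cont: "\<And>t. isCont \<phi> t" and p0: "\<phi> 0 \<le> 0" and K: "0 \<le> K"
    and est: "\<And>t \<epsilon>. 0 \<le> t \<Longrightarrow> 0 < \<epsilon> \<Longrightarrow> \<exists>d>0. \<forall>h. 0 < h \<and> h < d \<longrightarrow> \<phi> (t + h) \<le> \<phi> t + h * K * \<phi> t + \<epsilon> * h"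
    and T: "0 \<le> T"
  shows "\<phi> T \<le> 0"
proof -
  have main: "\<phi> T \<le> \<delta> * exp ((K + 1) * T)" if dp: "0 < \<delta>" for \<delta> :: real
  proof (rule ccontr)
    define \<psi> where "\<psi> t = \<delta> * exp ((K + 1) * t)" for t
    assume "\<not> \<phi> T \<le> \<delta> * exp ((K + 1) * T)"
    then have TB0: "\<phi> T > \<psi> T" unfolding \<psi>_def by simp
    define B where "B = {t. 0 \<le> t \<and> t \<le> T \<and> \<phi> t > \<psi> t}"
    have TB: "T \<in> B" using TB0 T unfolding B_def by auto
    have Bne: "B \<noteq> {}" using TB by auto
    have bdd: "bdd_below B" unfolding B_def by (rule bdd_belowI[of _ 0]) auto
    define s where "s = Inf B"
    have s0: "0 \<le> s" unfolding s_def by (rule cInf_greatest[OF Bne]) (auto simp: B_def)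
    have sT: "s \<le> T" unfolding s_def by (rule cInf_lower[OF TB bdd])
    have below: "\<phi> r \<le> \<psi> r" if "0 \<le> r" "r < s" for r
    proof (rule ccontr)
      assume "\<not> \<phi> r \<le> \<psi> r"
      then have "r \<in> B" using that sT unfolding B_def by auto
      then have "s \<le> r" unfolding s_def using cInf_lower[OF _ bdd] by auto
      then show False using that by auto
    qed
    have psi0: "\<phi> 0 < \<psi> 0" using p0 dp unfolding \<psi>_def by auto
    have sB: "\<phi> s \<le> \<psi> s"
    proof (rule ccontr)
      assume c: "\<not> \<phi> s \<le> \<psi> s"
      have "s \<noteq> 0" using c psi0 by auto
      with s0 have spos: "0 < s" by auto
      have "isCont (\<lambda>t. \<phi> t - \<psi> t) s" unfolding \<psi>_def by (intro continuous_intros cont)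
      then have "((\<lambda>t. \<phi> t - \<psi> t) \<longlongrightarrow> \<phi> s - \<psi> s) (at s)" by (simp add: isCont_def)
      then have "eventually (\<lambda>t. 0 < \<phi> t - \<psi> t) (at s)"
        by (rule order_tendstoD) (use c in auto)
      then obtain d where d: "d > 0" "\<And>t. t \<noteq> s \<Longrightarrow> dist t s < d \<Longrightarrow> 0 < \<phi> t - \<psi> t"
        unfolding eventually_at by auto
      define r where "r = s - min (d/2) (s/2)"
      have "0 \<le> r" "r < s" "dist r s < d" "r \<noteq> s" unfolding r_def using d spos by (auto simp: dist_real_def)
      then show False using below d(2) by fastforce
    qed
    have sne: "s \<noteq> T" using sB TB0 by auto
    define \<epsilon> where "\<epsilon> = \<delta> * exp ((K + 1) * s)"
    have ep: "0 < \<epsilon>" unfolding \<epsilon>_def using dp by auto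
    obtain d where d: "d > 0" "\<And>h. 0 < h \<Longrightarrow> h < d \<Longrightarrow> \<phi> (s + h) \<le> \<phi> s + h * K * \<phi> s + \<epsilon> * h"
      using est[OF s0 ep] by auto
    have "Inf B < s + d" using d s_def by auto
    then obtain x where x: "x \<in> B" "x < s + d" using cInf_less_iff[OF Bne bdd] by auto
    have "s \<le> x" unfolding s_def using cInf_lower[OF x(1) bdd] .
    moreover have "x \<noteq> s" using x(1) sB unfolding B_def by auto
    ultimately have hpos: "0 < x - s" by auto
    define h where "h = x - s"
    have hp: "0 < h" "h < d" using hpos x(2) unfolding h_def by auto
    have "\<phi> x = \<phi> (s + h)" unfolding h_def by simp
    also have "\<dots> \<le> \<phi> s * (1 + h * K) + \<epsilon> * h" using d(2)[OF hp] by (simp add: algebra_simps)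
    also have "\<dots> \<le> \<psi> s * (1 + h * K) + \<epsilon> * h"
      using sB hp K by (intro add_right_mono mult_right_mono) auto
    also have "\<dots> = \<epsilon> * (1 + (K + 1) * h)" unfolding \<psi>_def \<epsilon>_def by (simp add: algebra_simps)
    also have "\<dots> \<le> \<epsilon> * exp ((K + 1) * h)"
      using ep by (intro mult_left_mono) (auto simp: exp_ge_add_one_self)
    also have "\<dots> = \<psi> x" unfolding \<epsilon>_def \<psi>_def h_def by (simp add: exp_add[symmetric] algebra_simps)
    finally show False using x(1) unfolding B_def by auto
  qed
  show ?thesis
  proof (rule ccontr)
    assume "\<not> \<phi> T \<le> 0"
    then have pos: "0 < \<phi> T" by simp
    define \<delta> where "\<delta> = \<phi> T / (2 * exp ((K + 1) * T))"
    have "0 < \<delta>" unfolding \<delta>_def using pos by auto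
    from main[OF this] have "\<phi> T \<le> \<phi> T / 2" unfolding \<delta>_def by simp
    then show False using pos by simp
  qed
qed

lemma gron_all:
  fixes \<phi> :: "real \<Rightarrow> real"
  assumes cont: "\<And>t. isCont \<phi> t" and p0: "\<phi> 0 \<le> 0" and K: "0 \<le> K"
    and est: "\<And>t \<epsilon>. 0 < \<epsilon> \<Longrightarrow> \<exists>d>0. \<forall>h. h \<noteq> 0 \<and> \<bar>h\<bar> < d \<longrightarrow> \<phi> (t + h) \<le> \<phi> t + \<bar>h\<bar> * K * \<phi> t + \<epsilon> * \<bar>h\<bar>"
  shows "\<phi> T \<le> 0"
proof (cases "0 \<le> T")
  case True
  show ?thesis
  proof (rule gron_fwd[OF cont p0 K _ True])
    fix t \<epsilon> :: real assume "0 \<le> t" "0 < \<epsilon>"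
    from est[OF this(2), of t] obtain d where "d > 0" "\<forall>h. h \<noteq> 0 \<and> \<bar>h\<bar> < d \<longrightarrow> \<phi> (t + h) \<le> \<phi> t + \<bar>h\<bar> * K * \<phi> t + \<epsilon> * \<bar>h\<bar>"
      by auto
    then show "\<exists>d>0. \<forall>h. 0 < h \<and> h < d \<longrightarrow> \<phi> (t + h) \<le> \<phi> t + h * K * \<phi> t + \<epsilon> * h"
    proof (intro exI[of _ d] conjI allI impI)
      fix h assume h: "0 < h \<and> h < d"
      assume "0 < d" and hh: "\<forall>h. h \<noteq> 0 \<and> \<bar>h\<bar> < d \<longrightarrow> \<phi> (t + h) \<le> \<phi> t + \<bar>h\<bar> * K * \<phi> t + \<epsilon> * \<bar>h\<bar>"
      have "h \<noteq> 0 \<and> \<bar>h\<bar> < d" using h by auto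
      then have "\<phi> (t + h) \<le> \<phi> t + \<bar>h\<bar> * K * \<phi> t + \<epsilon> * \<bar>h\<bar>" using hh by blast
      then show "\<phi> (t + h) \<le> \<phi> t + h * K * \<phi> t + \<epsilon> * h" using h by (simp add: abs_of_pos)
    qed auto
  qed
next
  case False
  define chi where "chi t = \<phi> (- t)" for t
  have "chi (- T) \<le> 0"
  proof (rule gron_fwd[of chi, OF _ _ K])
    show "isCont chi t" for t unfolding chi_def[abs_def] by (rule isCont_o2[OF _ cont]) (intro continuous_intros)
    show "chi 0 \<le> 0" using p0 unfolding chi_def by simp
    show "0 \<le> - T" using False by simp
    fix t \<epsilon> :: real assume "0 \<le> t" "0 < \<epsilon>"
    from est[OF this(2), of "- t"] obtain d where "d > 0" "\<forall>h. h \<noteq> 0 \<and> \<bar>h\<bar> < d \<longrightarrow> \<phi> (- t + h) \<le> \<phi> (- t) + \<bar>h\<bar> * K * \<phi> (- t) + \<epsilon> * \<bar>h\<bar>"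
      by auto
    then show "\<exists>d>0. \<forall>h. 0 < h \<and> h < d \<longrightarrow> chi (t + h) \<le> chi t + h * K * chi t + \<epsilon> * h"
      unfolding chi_def
    proof (intro exI[of _ d] conjI allI impI)
      fix h assume h: "0 < h \<and> h < d"
      assume "0 < d" and hh: "\<forall>h. h \<noteq> 0 \<and> \<bar>h\<bar> < d \<longrightarrow> \<phi> (- t + h) \<le> \<phi> (- t) + \<bar>h\<bar> * K * \<phi> (- t) + \<epsilon> * \<bar>h\<bar>"
      have "- h \<noteq> 0 \<and> \<bar>- h\<bar> < d" using h by auto
      then have "\<phi> (- t + - h) \<le> \<phi> (- t) + \<bar>- h\<bar> * K * \<phi> (- t) + \<epsilon> * \<bar>- h\<bar>" using hh by blast
      then show "\<phi> (- (t + h)) \<le> \<phi> (- t) + h * K * \<phi> (- t) + \<epsilon> * h" using h by (simp add: abs_of_pos)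
    qed auto
  qed
  then show ?thesis unfolding chi_def by simp
qed

locale gr =
  fixes M :: "'a measure" and W :: "'a \<Rightarrow> 'a \<Rightarrow> real"
  assumes gr: "graphon M W"
begin

lemma prob: "prob_space M"
  using gr unfolding graphon_def by auto

lemma Wmeas[measurable]: "(\<lambda>p. W (fst p) (snd p)) \<in> borel_measurable (M \<Otimes>\<^sub>M M)"
  using gr unfolding graphon_def by auto

lemma Wbnd: "x \<in> space M \<Longrightarrow> y \<in> space M \<Longrightarrow> 0 \<le> W x y \<and> W x y \<le> 1"
  using gr unfolding graphon_def by auto

lemma Wsym: "x \<in> space M \<Longrightarrow> y \<in> space M \<Longrightarrow> W x y = W y x"
  using gr unfolding graphon_def by auto

lemma Wsec[measurable]: "x \<in> space M \<Longrightarrow> W x \<in> borel_measurable M"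
  using measurable_Pair2[OF Wmeas, of x] by simp

lemma twin_space: "twin M W x y \<Longrightarrow> x \<in> space M \<and> y \<in> space M"
  unfolding twin_def by auto

lemma twin_refl: "x \<in> space M \<Longrightarrow> twin M W x x"
  unfolding twin_def by auto

lemma twin_sym: "twin M W x y \<Longrightarrow> twin M W y x"
  unfolding twin_def by (auto elim: AE_mp)

lemma twin_trans: "twin M W x y \<Longrightarrow> twin M W y z \<Longrightarrow> twin M W x z"
  unfolding twin_def by (auto elim: AE_mp)

lemma twinfree_sigma: "sigma_algebra (space M) (twinfree_sets M W)"
  unfolding sigma_algebra_iff2
proof (intro conjI allI ballI impI)
  show "twinfree_sets M W \<subseteq> Pow (space M)"
    unfolding twinfree_sets_def using sets.sets_into_space by auto
  show "{} \<in> twinfree_sets M W" unfolding twinfree_sets_def by auto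
  fix s assume "s \<in> twinfree_sets M W"
  then show "space M - s \<in> twinfree_sets M W"
    unfolding twinfree_sets_def using twin_space by blast
next
  fix A :: "nat \<Rightarrow> 'a set" assume "range A \<subseteq> twinfree_sets M W"
  then show "(\<Union>i. A i) \<in> twinfree_sets M W"
    unfolding twinfree_sets_def by auto
qed

definition A where "A = twinfree_subalg M W"

lemma twinfree_Pow: "twinfree_sets M W \<subseteq> Pow (space M)"
  unfolding twinfree_sets_def using sets.sets_into_space by auto

lemma sets_A: "sets A = twinfree_sets M W"
  unfolding A_def twinfree_subalg_def
  using sets_measure_of[of "twinfree_sets M W" "space M"] sigma_algebra.sigma_sets_eq[OF twinfree_sigma]
    twinfree_Pow by simp

lemma space_A: "space A = space M"
  unfolding A_def twinfree_subalg_def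
  using twinfree_Pow by simp

lemma subalg: "subalgebra M A"
  unfolding subalgebra_def using sets_A space_A unfolding twinfree_sets_def by auto

lemma sfs: "sigma_finite_subalgebra M A"
  unfolding sigma_finite_subalgebra_def
proof
  show "subalgebra M A" by (rule subalg)
  have "prob_space (restr_to_subalg M A)" by (rule prob_space_restr_to_subalg[OF subalg prob])
  then show "sigma_finite_measure (restr_to_subalg M A)"
    by (simp add: prob_space_imp_sigma_finite)
qed

lemma measA_inv:
  assumes h: "h \<in> measurable A N" and "twin M W x y" and sg: "{h x} \<in> sets N"
  shows "h x = h y"
proof -
  have "h -` {h x} \<inter> space A \<in> sets A" using measurable_sets[OF h sg] .
  then have "h -` {h x} \<inter> space A \<in> twinfree_sets M W" using sets_A by simp
  moreover have "x \<in> h -` {h x} \<inter> space A" using assms(2) twin_space space_A by auto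
  ultimately have "y \<in> h -` {h x} \<inter> space A" using assms(2) unfolding twinfree_sets_def by blast
  then show ?thesis by auto
qed

lemma measA_inv_real:
  fixes h :: "'a \<Rightarrow> real"
  assumes h: "h \<in> borel_measurable A" and "twin M W x y"
  shows "h x = h y"
  using measA_inv[OF h assms(2)] borel_closed[OF closed_singleton] by blast

lemma measA_intro:
  assumes h: "h \<in> measurable M N" and inv: "\<And>x y. twin M W x y \<Longrightarrow> h x = h y"
  shows "h \<in> measurable A N"
proof (rule measurableI)
  fix x assume "x \<in> space A" then show "h x \<in> space N" using h space_A measurable_space by metis
next
  fix B assume B: "B \<in> sets N"
  have "h -` B \<inter> space M \<in> sets M" using measurable_sets[OF h B] .
  moreover have "\<forall>x y. twin M W x y \<longrightarrow> (x \<in> h -` B \<inter> space M \<longleftrightarrow> y \<in> h -` B \<inter> space M)"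
    using inv twin_space by auto
  ultimately show "h -` B \<inter> space A \<in> sets A"
    unfolding sets_A twinfree_sets_def space_A by auto
qed

lemma measA_M: "h \<in> measurable A N \<Longrightarrow> h \<in> measurable M N"
  by (rule measurable_from_subalg[OF subalg])

lemma measA_pair_inv:
  fixes h :: "'a \<times> 'a \<Rightarrow> real"
  assumes h: "h \<in> borel_measurable (A \<Otimes>\<^sub>M A)" and "twin M W x x'" "twin M W y y'"
  shows "h (x, y) = h (x', y')"
proof -
  have sy: "y \<in> space A" "x' \<in> space A" using assms twin_space space_A by auto
  have "h (x, y) = h (x', y)"
    using measA_inv_real[OF measurable_Pair1[OF h sy(1)] assms(2)] by simp
  also have "\<dots> = h (x', y')"
    using measA_inv_real[OF measurable_Pair2[OF h sy(2)] assms(3)] by simp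
  finally show ?thesis .
qed

end

context gr begin

definition Pe :: "('a \<Rightarrow> real) \<Rightarrow> 'a \<Rightarrow> real" where "Pe u = real_cond_exp M A u"

lemma Pe_measA[measurable]: "Pe u \<in> borel_measurable A"
  unfolding Pe_def by simp

lemma Pe_meas[measurable]: "Pe u \<in> borel_measurable M"
  unfolding Pe_def by simp

lemma Pe_inv: "twin M W x y \<Longrightarrow> Pe u x = Pe u y"
  by (rule measA_inv_real[OF Pe_measA])

lemma Pe_int: "integrable M u \<Longrightarrow> integrable M (Pe u)"
  unfolding Pe_def using sigma_finite_subalgebra.real_cond_exp_int(1)[OF sfs] by blast

lemma Pe_int2: "integrable M u \<Longrightarrow> (LINT x|M. Pe u x) = (LINT x|M. u x)"
  unfolding Pe_def using sigma_finite_subalgebra.real_cond_exp_int(2)[OF sfs] by blast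

lemma Pe_diff: "integrable M u \<Longrightarrow> integrable M v \<Longrightarrow>
   AE x in M. Pe (\<lambda>x. u x - v x) x = Pe u x - Pe v x"
  unfolding Pe_def using sigma_finite_subalgebra.real_cond_exp_diff[OF sfs] by blast

lemma Pe_add: "integrable M u \<Longrightarrow> integrable M v \<Longrightarrow>
   AE x in M. Pe (\<lambda>x. u x + v x) x = Pe u x + Pe v x"
  unfolding Pe_def using sigma_finite_subalgebra.real_cond_exp_add[OF sfs] by blast

lemma Pe_cmult: "integrable M u \<Longrightarrow> AE x in M. Pe (\<lambda>x. c * u x) x = c * Pe u x"
  unfolding Pe_def using sigma_finite_subalgebra.real_cond_exp_cmult[OF sfs] by blast

lemma Pe_cong: "AE x in M. u x = v x \<Longrightarrow> u \<in> borel_measurable M \<Longrightarrow> v \<in> borel_measurable M \<Longrightarrow>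
   AE x in M. Pe u x = Pe v x"
  unfolding Pe_def using sigma_finite_subalgebra.real_cond_exp_cong[OF sfs] by blast

lemma Pe_Fmeas: "integrable M u \<Longrightarrow> u \<in> borel_measurable A \<Longrightarrow> AE x in M. Pe u x = u x"
  unfolding Pe_def using sigma_finite_subalgebra.real_cond_exp_F_meas[OF sfs] by blast

lemma Pe_abs: 
  assumes u: "integrable M u"
  shows "AE x in M. \<bar>Pe u x\<bar> \<le> Pe (\<lambda>x. \<bar>u x\<bar>) x"
proof -
  have ia: "integrable M (\<lambda>x. \<bar>u x\<bar>)" using u by simp
  have "AE x in M. Pe u x \<le> Pe (\<lambda>x. \<bar>u x\<bar>) x"
    unfolding Pe_def
    by (rule sigma_finite_subalgebra.real_cond_exp_mono[OF sfs]) (use u ia in auto)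
  moreover have "AE x in M. Pe (\<lambda>x. - \<bar>u x\<bar>) x \<le> Pe u x"
    unfolding Pe_def
    by (rule sigma_finite_subalgebra.real_cond_exp_mono[OF sfs]) (use u ia in auto)
  moreover have "AE x in M. Pe (\<lambda>x. (-1) * \<bar>u x\<bar>) x = (-1) * Pe (\<lambda>x. \<bar>u x\<bar>) x"
    by (rule Pe_cmult[OF ia])
  ultimately show ?thesis by eventually_elim auto
qed

lemma Pe_contr:
  assumes u: "integrable M u"
  shows "(LINT x|M. \<bar>Pe u x\<bar>) \<le> (LINT x|M. \<bar>u x\<bar>)"
proof -
  have ia: "integrable M (\<lambda>x. \<bar>u x\<bar>)" using u by simp
  have "(LINT x|M. \<bar>Pe u x\<bar>) \<le> (LINT x|M. Pe (\<lambda>x. \<bar>u x\<bar>) x)"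
    by (rule integral_mono_AE) (use Pe_int[OF u] Pe_int[OF ia] Pe_abs[OF u] in auto)
  also have "\<dots> = (LINT x|M. \<bar>u x\<bar>)" by (rule Pe_int2[OF ia])
  finally show ?thesis .
qed

abbreviation S where "S \<equiv> twin_const_L1 M W"

lemma S_iff: "u \<in> S \<longleftrightarrow> integrable M u \<and> (AE x in M. Pe u x = u x)"
proof
  assume "u \<in> S"
  then obtain u' where u: "integrable M u" and u': "integrable M u'" "AE x in M. u x = u' x"
      "\<And>x y. twin M W x y \<Longrightarrow> u' x = u' y"
    unfolding twin_const_L1_def by auto
  have mA: "u' \<in> borel_measurable A"
    by (rule measA_intro) (use u' in auto)
  have "AE x in M. Pe u' x = u' x" by (rule Pe_Fmeas[OF u'(1) mA])
  moreover have "AE x in M. Pe u x = Pe u' x" by (rule Pe_cong) (use u u' in auto)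
  ultimately show "integrable M u \<and> (AE x in M. Pe u x = u x)"
    using u u'(2) by (auto elim: AE_mp)
next
  assume "integrable M u \<and> (AE x in M. Pe u x = u x)"
  then show "u \<in> S" unfolding twin_const_L1_def
    by (auto intro!: exI[of _ "Pe u"] Pe_int Pe_inv elim: AE_mp)
qed

lemma S_int: "u \<in> S \<Longrightarrow> integrable M u"
  using S_iff by blast

lemma S_Pe: "u \<in> S \<Longrightarrow> AE x in M. Pe u x = u x"
  using S_iff by blast

lemma PeS: "integrable M u \<Longrightarrow> Pe u \<in> S"
proof -
  assume u: "integrable M u"
  have "AE x in M. Pe (Pe u) x = Pe u x" by (rule Pe_Fmeas) (use Pe_int[OF u] in auto)
  then show ?thesis using S_iff Pe_int[OF u] by auto
qed

lemma measA_S: "integrable M u \<Longrightarrow> u \<in> borel_measurable A \<Longrightarrow> u \<in> S"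
  using S_iff Pe_Fmeas by blast

lemma dist_proj:
  assumes v: "v \<in> S" and w: "integrable M w"
  shows "(LINT x|M. \<bar>w x - Pe w x\<bar>) \<le> 2 * (LINT x|M. \<bar>w x - v x\<bar>)"
proof -
  have vi: "integrable M v" using S_int[OF v] .
  have "(LINT x|M. \<bar>w x - Pe w x\<bar>) \<le> (LINT x|M. \<bar>w x - v x\<bar> + \<bar>Pe (\<lambda>x. v x - w x) x\<bar>)"
  proof (rule integral_mono_AE)
    show "integrable M (\<lambda>x. \<bar>w x - Pe w x\<bar>)" using w Pe_int[OF w] by auto
    show "integrable M (\<lambda>x. \<bar>w x - v x\<bar> + \<bar>Pe (\<lambda>x. v x - w x) x\<bar>)"
      using w vi Pe_int[of "\<lambda>x. v x - w x"] by auto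
    show "AE x in M. \<bar>w x - Pe w x\<bar> \<le> \<bar>w x - v x\<bar> + \<bar>Pe (\<lambda>x. v x - w x) x\<bar>"
      using Pe_diff[OF vi w] S_Pe[OF v] by eventually_elim auto
  qed
  also have "\<dots> = (LINT x|M. \<bar>w x - v x\<bar>) + (LINT x|M. \<bar>Pe (\<lambda>x. v x - w x) x\<bar>)"
  proof -
    have "integrable M (\<lambda>x. v x - w x)" using w vi by auto
    then have "integrable M (Pe (\<lambda>x. v x - w x))" by (rule Pe_int)
    then show ?thesis using w vi by (intro Bochner_Integration.integral_add) auto
  qed
  also have "(LINT x|M. \<bar>Pe (\<lambda>x. v x - w x) x\<bar>) \<le> (LINT x|M. \<bar>v x - w x\<bar>)"
    by (rule Pe_contr) (use w vi in auto)
  also have "(LINT x|M. \<bar>v x - w x\<bar>) = (LINT x|M. \<bar>w x - v x\<bar>)"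
    by (simp add: abs_minus_commute)
  finally show ?thesis by simp
qed

lemma zero_dist_S:
  assumes w: "integrable M w" and z: "(LINT x|M. \<bar>w x - Pe w x\<bar>) \<le> 0"
  shows "w \<in> S"
proof -
  have "(LINT x|M. \<bar>w x - Pe w x\<bar>) = 0"
  proof -
    have "0 \<le> (LINT x|M. \<bar>w x - Pe w x\<bar>)" by (rule integral_nonneg_AE) auto
    then show ?thesis using z by linarith
  qed
  then have "AE x in M. \<bar>w x - Pe w x\<bar> = 0"
    using integral_nonneg_eq_0_iff_AE[of M "\<lambda>x. \<bar>w x - Pe w x\<bar>"] w Pe_int[OF w] by auto
  then show ?thesis using S_iff w by auto
qed

lemma S_linear: "l1_linear_subspace M S"
  unfolding l1_linear_subspace_def
proof (intro conjI ballI allI)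
  show "\<And>u. u \<in> S \<Longrightarrow> integrable M u" by (rule S_int)
  show "(\<lambda>x. 0) \<in> S" unfolding twin_const_L1_def by auto
next
  fix u v assume "u \<in> S" "v \<in> S"
  then obtain u' v' where "integrable M u" "integrable M u'" "AE x in M. u x = u' x"
      "\<And>x y. twin M W x y \<Longrightarrow> u' x = u' y"
      "integrable M v" "integrable M v'" "AE x in M. v x = v' x"
      "\<And>x y. twin M W x y \<Longrightarrow> v' x = v' y"
    unfolding twin_const_L1_def by auto
  then show "(\<lambda>x. u x + v x) \<in> S" unfolding twin_const_L1_def
    by (auto intro!: exI[of _ "\<lambda>x. u' x + v' x"] elim: AE_mp)
next
  fix u c assume "u \<in> S"
  then obtain u' where "integrable M u" "integrable M u'" "AE x in M. u x = u' x"
      "\<And>x y. twin M W x y \<Longrightarrow> u' x = u' y"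
    unfolding twin_const_L1_def by auto
  then show "(\<lambda>x. c * u x) \<in> S" unfolding twin_const_L1_def
    by (auto intro!: exI[of _ "\<lambda>x. c * u' x"] elim: AE_mp)
qed

lemma S_closed: "l1_closed M S"
  unfolding l1_closed_def
proof (intro allI impI)
  fix U :: "nat \<Rightarrow> 'a \<Rightarrow> real" and u
  assume U: "\<forall>n. U n \<in> S" and u: "integrable M u" and lim: "(\<lambda>n. l1dist M (U n) u) \<longlonglongrightarrow> 0"
  have b: "(LINT x|M. \<bar>u x - Pe u x\<bar>) \<le> 2 * l1dist M (U n) u" for n
    using dist_proj[OF U[rule_format, of n] u] unfolding l1dist_def by (simp add: abs_minus_commute)
  have l2: "(\<lambda>n. 2 * l1dist M (U n) u) \<longlonglongrightarrow> 2 * 0" by (intro tendsto_intros lim)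
  have "(LINT x|M. \<bar>u x - Pe u x\<bar>) \<le> 2 * 0"
    by (rule LIMSEQ_le_const[OF l2]) (use b in blast)
  then show "u \<in> S" using zero_dist_S[OF u] by simp
qed

end

lemma lip_bound:
  fixes h :: "real \<times> real \<Rightarrow> real"
  assumes "L-lipschitz_on UNIV h"
  shows "\<bar>h (a, b) - h (c, d)\<bar> \<le> L * (\<bar>a - c\<bar> + \<bar>b - d\<bar>)"
proof -
  have L: "0 \<le> L" and d: "dist (h (a,b)) (h (c,d)) \<le> L * dist (a,b) (c,d)"
    using assms unfolding lipschitz_on_def by auto
  have "dist (a,b) (c,d) = norm (a - c, b - d)" by (simp add: dist_norm)
  also have "\<dots> \<le> norm (a - c) + norm (b - d)" by (rule norm_Pair_le)
  finally have "dist (a,b) (c,d) \<le> \<bar>a - c\<bar> + \<bar>b - d\<bar>" by simp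
  then have "L * dist (a,b) (c,d) \<le> L * (\<bar>a - c\<bar> + \<bar>b - d\<bar>)" using L by (rule mult_left_mono)
  with d show ?thesis by (simp add: dist_real_def)
qed

lemma lip_bound0:
  fixes h :: "real \<times> real \<Rightarrow> real"
  assumes "L-lipschitz_on UNIV h"
  shows "\<bar>h (a, b)\<bar> \<le> \<bar>h (0, 0)\<bar> + L * (\<bar>a\<bar> + \<bar>b\<bar>)"
  using lip_bound[OF assms, of a b 0 0] by simp

lemma lip_meas:
  fixes h :: "real \<times> real \<Rightarrow> real"
  assumes "L-lipschitz_on UNIV h"
  shows "h \<in> borel_measurable borel"
  using lipschitz_on_continuous_on[OF assms] by (rule borel_measurable_continuous_onI)

lemma lip_nonneg: "L-lipschitz_on U h \<Longrightarrow> 0 \<le> L"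
  unfolding lipschitz_on_def by auto

locale grl = gr M W for M :: "'a measure" and W +
  fixes f g :: "real \<times> real \<Rightarrow> real" and Lf Lg :: real
  assumes lf: "Lf-lipschitz_on UNIV f" and lg: "Lg-lipschitz_on UNIV g"
begin

lemma fmeas[measurable]: "f \<in> borel_measurable borel" by (rule lip_meas[OF lf])
lemma gmeas[measurable]: "g \<in> borel_measurable borel" by (rule lip_meas[OF lg])
lemma Lf0: "0 \<le> Lf" by (rule lip_nonneg[OF lf])
lemma Lg0: "0 \<le> Lg" by (rule lip_nonneg[OF lg])

definition Gi :: "('a \<Rightarrow> real) \<Rightarrow> 'a \<Rightarrow> real" where
  "Gi u x = (LINT y|M. W x y * g (u x, u y))"

abbreviation F where "F \<equiv> gds_field M W f g"

lemma F_eq: "F u x = f (u x, Gi u x)"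
  unfolding gds_field_def Gi_def by simp

lemma Wg_meas:
  assumes [measurable]: "u \<in> borel_measurable M"
  shows "(\<lambda>p. W (fst p) (snd p) * g (u (fst p), u (snd p))) \<in> borel_measurable (M \<Otimes>\<^sub>M M)"
  by measurable

lemma Gi_meas[measurable]:
  assumes [measurable]: "u \<in> borel_measurable M"
  shows "Gi u \<in> borel_measurable M"
proof -
  interpret prob_space M by (rule prob)
  have "(\<lambda>(x, y). W x y * g (u x, u y)) \<in> borel_measurable (M \<Otimes>\<^sub>M M)"
    using Wg_meas[OF assms] by (simp add: case_prod_beta)
  then have "(\<lambda>x. LINT y|M. W x y * g (u x, u y)) \<in> borel_measurable M"
    by (rule borel_measurable_lebesgue_integral)
  then show ?thesis unfolding Gi_def[abs_def] .
qed

lemma F_meas[measurable]: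
  assumes [measurable]: "u \<in> borel_measurable M"
  shows "F u \<in> borel_measurable M"
  unfolding F_eq[abs_def] by measurable

lemma sec_int:
  assumes u: "integrable M u" and x: "x \<in> space M"
  shows "integrable M (\<lambda>y. W x y * g (u x, u y))"
proof -
  interpret prob_space M by (rule prob)
  have [measurable]: "u \<in> borel_measurable M" using u by simp
  show ?thesis
  proof (rule Bochner_Integration.integrable_bound)
    show "integrable M (\<lambda>y. \<bar>g (0,0)\<bar> + Lg * (\<bar>u x\<bar> + \<bar>u y\<bar>))"
      using u by auto
    show "(\<lambda>y. W x y * g (u x, u y)) \<in> borel_measurable M" using x by measurable
    show "AE y in M. norm (W x y * g (u x, u y)) \<le> norm (\<bar>g (0,0)\<bar> + Lg * (\<bar>u x\<bar> + \<bar>u y\<bar>))"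
    proof (rule AE_I2)
      fix y assume y: "y \<in> space M"
      have w: "0 \<le> W x y" "W x y \<le> 1" using Wbnd[OF x y] by auto
      have "\<bar>W x y * g (u x, u y)\<bar> \<le> 1 * \<bar>g (u x, u y)\<bar>"
        unfolding abs_mult using w by (intro mult_right_mono) auto
      also have "\<dots> \<le> \<bar>g (0,0)\<bar> + Lg * (\<bar>u x\<bar> + \<bar>u y\<bar>)" using lip_bound0[OF lg] by simp
      finally show "norm (W x y * g (u x, u y)) \<le> norm (\<bar>g (0,0)\<bar> + Lg * (\<bar>u x\<bar> + \<bar>u y\<bar>))"
        using Lg0 by simp
    qed
  qed
qed

lemma Gi_bound:
  assumes u: "integrable M u" and x: "x \<in> space M"
  shows "\<bar>Gi u x\<bar> \<le> \<bar>g (0,0)\<bar> + Lg * \<bar>u x\<bar> + Lg * (LINT y|M. \<bar>u y\<bar>)"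
proof -
  interpret prob_space M by (rule prob)
  have "\<bar>Gi u x\<bar> \<le> (LINT y|M. \<bar>W x y * g (u x, u y)\<bar>)"
    unfolding Gi_def by (rule integral_abs_bound)
  also have "\<dots> \<le> (LINT y|M. \<bar>g (0,0)\<bar> + Lg * \<bar>u x\<bar> + Lg * \<bar>u y\<bar>)"
  proof (rule integral_mono)
    show "integrable M (\<lambda>y. \<bar>W x y * g (u x, u y)\<bar>)" using sec_int[OF u x] by simp
    show "integrable M (\<lambda>y. \<bar>g (0,0)\<bar> + Lg * \<bar>u x\<bar> + Lg * \<bar>u y\<bar>)" using u by auto
    fix y assume y: "y \<in> space M"
    have w: "0 \<le> W x y" "W x y \<le> 1" using Wbnd[OF x y] by auto
    have "\<bar>W x y * g (u x, u y)\<bar> \<le> 1 * \<bar>g (u x, u y)\<bar>"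
      unfolding abs_mult using w by (intro mult_right_mono) auto
    also have "\<dots> \<le> \<bar>g (0,0)\<bar> + Lg * (\<bar>u x\<bar> + \<bar>u y\<bar>)" using lip_bound0[OF lg] by simp
    finally show "\<bar>W x y * g (u x, u y)\<bar> \<le> \<bar>g (0,0)\<bar> + Lg * \<bar>u x\<bar> + Lg * \<bar>u y\<bar>"
      by (simp add: algebra_simps)
  qed
  also have "\<dots> = \<bar>g (0,0)\<bar> + Lg * \<bar>u x\<bar> + Lg * (LINT y|M. \<bar>u y\<bar>)"
    using u by (simp add: prob_space)
  finally show ?thesis .
qed

lemma Gi_int:
  assumes u: "integrable M u"
  shows "integrable M (Gi u)"
proof -
  interpret prob_space M by (rule prob)
  have [measurable]: "u \<in> borel_measurable M" using u by simp
  show ?thesis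
  proof (rule Bochner_Integration.integrable_bound)
    show "integrable M (\<lambda>x. \<bar>g (0,0)\<bar> + Lg * \<bar>u x\<bar> + Lg * (LINT y|M. \<bar>u y\<bar>))" using u by auto
    show "Gi u \<in> borel_measurable M" by measurable
    show "AE x in M. norm (Gi u x) \<le> norm (\<bar>g (0,0)\<bar> + Lg * \<bar>u x\<bar> + Lg * (LINT y|M. \<bar>u y\<bar>))"
      using Gi_bound[OF u] Lg0 by (intro AE_I2) (force intro: order_trans[OF _ abs_ge_self] simp: integral_nonneg_AE)
  qed
qed

lemma F_int:
  assumes u: "integrable M u"
  shows "integrable M (F u)"
proof -
  interpret prob_space M by (rule prob)
  have [measurable]: "u \<in> borel_measurable M" using u by simp
  show ?thesis
  proof (rule Bochner_Integration.integrable_bound)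
    show "integrable M (\<lambda>x. \<bar>f (0,0)\<bar> + Lf * (\<bar>u x\<bar> + \<bar>Gi u x\<bar>))" using u Gi_int[OF u] by auto
    show "F u \<in> borel_measurable M" by measurable
    show "AE x in M. norm (F u x) \<le> norm (\<bar>f (0,0)\<bar> + Lf * (\<bar>u x\<bar> + \<bar>Gi u x\<bar>))"
      using lip_bound0[OF lf] Lf0 unfolding F_eq by (intro AE_I2) auto
  qed
qed

end

context grl begin

lemma Gi_diff:
  assumes u: "integrable M u" and v: "integrable M v" and x: "x \<in> space M"
  shows "\<bar>Gi u x - Gi v x\<bar> \<le> Lg * \<bar>u x - v x\<bar> + Lg * (LINT y|M. \<bar>u y - v y\<bar>)"
proof -
  interpret prob_space M by (rule prob)
  have "Gi u x - Gi v x = (LINT y|M. W x y * g (u x, u y) - W x y * g (v x, v y))"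
    unfolding Gi_def using sec_int[OF u x] sec_int[OF v x] by (rule Bochner_Integration.integral_diff[symmetric])
  then have "\<bar>Gi u x - Gi v x\<bar> \<le> (LINT y|M. \<bar>W x y * g (u x, u y) - W x y * g (v x, v y)\<bar>)"
    using integral_abs_bound by metis
  also have "\<dots> \<le> (LINT y|M. Lg * \<bar>u x - v x\<bar> + Lg * \<bar>u y - v y\<bar>)"
  proof (rule integral_mono)
    show "integrable M (\<lambda>y. \<bar>W x y * g (u x, u y) - W x y * g (v x, v y)\<bar>)"
      using sec_int[OF u x] sec_int[OF v x] by auto
    show "integrable M (\<lambda>y. Lg * \<bar>u x - v x\<bar> + Lg * \<bar>u y - v y\<bar>)" using u v by auto
    fix y assume y: "y \<in> space M"
    have w: "0 \<le> W x y" "W x y \<le> 1" using Wbnd[OF x y] by auto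
    have "\<bar>W x y * g (u x, u y) - W x y * g (v x, v y)\<bar> = W x y * \<bar>g (u x, u y) - g (v x, v y)\<bar>"
      using w by (simp add: abs_mult right_diff_distrib[symmetric])
    also have "\<dots> \<le> 1 * \<bar>g (u x, u y) - g (v x, v y)\<bar>" using w by (intro mult_right_mono) auto
    also have "\<dots> \<le> Lg * (\<bar>u x - v x\<bar> + \<bar>u y - v y\<bar>)" using lip_bound[OF lg] by simp
    finally show "\<bar>W x y * g (u x, u y) - W x y * g (v x, v y)\<bar> \<le> Lg * \<bar>u x - v x\<bar> + Lg * \<bar>u y - v y\<bar>"
      by (simp add: algebra_simps)
  qed
  also have "\<dots> = Lg * \<bar>u x - v x\<bar> + Lg * (LINT y|M. \<bar>u y - v y\<bar>)"
    using u v by (simp add: prob_space)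
  finally show ?thesis .
qed

lemma F_lip:
  assumes u: "integrable M u" and v: "integrable M v"
  shows "(LINT x|M. \<bar>F u x - F v x\<bar>) \<le> Lf * (1 + 2 * Lg) * (LINT x|M. \<bar>u x - v x\<bar>)"
proof -
  interpret prob_space M by (rule prob)
  define D where "D = (LINT y|M. \<bar>u y - v y\<bar>)"
  have "(LINT x|M. \<bar>F u x - F v x\<bar>) \<le> (LINT x|M. Lf * (1 + Lg) * \<bar>u x - v x\<bar> + Lf * Lg * D)"
  proof (rule integral_mono)
    show "integrable M (\<lambda>x. \<bar>F u x - F v x\<bar>)" using F_int[OF u] F_int[OF v] by auto
    show "integrable M (\<lambda>x. Lf * (1 + Lg) * \<bar>u x - v x\<bar> + Lf * Lg * D)" using u v by auto
    fix x assume x: "x \<in> space M"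
    have "\<bar>F u x - F v x\<bar> \<le> Lf * (\<bar>u x - v x\<bar> + \<bar>Gi u x - Gi v x\<bar>)"
      unfolding F_eq by (rule lip_bound[OF lf])
    also have "\<dots> \<le> Lf * (\<bar>u x - v x\<bar> + (Lg * \<bar>u x - v x\<bar> + Lg * D))"
      using Gi_diff[OF u v x] Lf0 unfolding D_def by (intro mult_left_mono) auto
    finally show "\<bar>F u x - F v x\<bar> \<le> Lf * (1 + Lg) * \<bar>u x - v x\<bar> + Lf * Lg * D"
      by (simp add: algebra_simps)
  qed
  also have "\<dots> = Lf * (1 + Lg) * D + Lf * Lg * D"
    using u v by (simp add: prob_space D_def)
  also have "\<dots> = Lf * (1 + 2 * Lg) * D" by (simp add: algebra_simps)
  finally show ?thesis unfolding D_def .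
qed

lemma F_measA:
  assumes u: "integrable M u" and uA: "u \<in> borel_measurable A"
  shows "F u \<in> borel_measurable A"
proof (rule measA_intro)
  have [measurable]: "u \<in> borel_measurable M" using u by simp
  show "F u \<in> borel_measurable M" by measurable
  fix x y assume t: "twin M W x y"
  have xy: "x \<in> space M" "y \<in> space M" using twin_space[OF t] by auto
  have ux: "u x = u y" using measA_inv_real[OF uA t] .
  have "AE z in M. W x z = W y z" using t unfolding twin_def by auto
  then have "Gi u x = Gi u y" unfolding Gi_def ux
    by (intro integral_cong_AE) (use xy in \<open>auto elim: AE_mp\<close>)
  then show "F u x = F u y" unfolding F_eq ux by simp
qed

lemma F_S:
  assumes u: "integrable M u" and uA: "u \<in> borel_measurable A"
  shows "F u \<in> S"
  using measA_S[OF F_int[OF u] F_measA[OF u uA]] .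

lemma F_cong:
  assumes u: "integrable M u" and v: "integrable M v" and ae: "AE x in M. u x = v x"
  shows "AE x in M. F u x = F v x"
  using ae
proof (rule AE_mp, intro AE_I2 impI)
  have [measurable]: "u \<in> borel_measurable M" "v \<in> borel_measurable M" using u v by auto
  fix x assume x: "x \<in> space M" and e: "u x = v x"
  have "Gi u x = Gi v x" unfolding Gi_def e
    by (intro integral_cong_AE) (use x ae in \<open>auto elim: AE_mp\<close>)
  then show "F u x = F v x" unfolding F_eq e by simp
qed

end

context grl begin

abbreviation "L \<equiv> Lf * (1 + 2 * Lg)"

lemma L0: "0 \<le> L" using Lf0 Lg0 by simp

lemma E1:
  assumes a: "integrable M a" and b: "integrable M b" and h: "h \<noteq> 0"
  shows "(LINT x|M. \<bar>b x - Pe b x\<bar>) \<le> (LINT x|M. \<bar>a x - Pe a x\<bar>)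
     + \<bar>h\<bar> * (2 * L) * (LINT x|M. \<bar>a x - Pe a x\<bar>)
     + 2 * \<bar>h\<bar> * (LINT x|M. \<bar>(b x - a x) / h - F a x\<bar>)"
proof -
  define G where "G = F a"
  have Gi: "integrable M G" unfolding G_def by (rule F_int[OF a])
  define Dl where "Dl x = b x - a x - h * G x" for x
  have Di: "integrable M Dl" unfolding Dl_def using a b Gi by auto
  have hGi: "integrable M (\<lambda>x. h * G x)" using Gi by auto
  have bdec: "b = (\<lambda>x. a x + (h * G x + Dl x))" unfolding Dl_def by auto
  have e1: "AE x in M. Pe b x = Pe a x + Pe (\<lambda>x. h * G x + Dl x) x"
    unfolding bdec[symmetric] using Pe_add[OF a, of "\<lambda>x. h * G x + Dl x"] hGi Di bdec by auto
  have e2: "AE x in M. Pe (\<lambda>x. h * G x + Dl x) x = Pe (\<lambda>x. h * G x) x + Pe Dl x"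
    using Pe_add[OF hGi Di] by simp
  have e3: "AE x in M. Pe (\<lambda>x. h * G x) x = h * Pe G x" using Pe_cmult[OF Gi] by simp
  have PaI: "integrable M (Pe a)" using Pe_int[OF a] .
  have PGI: "integrable M (Pe G)" using Pe_int[OF Gi] .
  have PDI: "integrable M (Pe Dl)" using Pe_int[OF Di] .
  have GG: "(LINT x|M. \<bar>G x - Pe G x\<bar>) \<le> 2 * L * (LINT x|M. \<bar>a x - Pe a x\<bar>)"
  proof -
    have "(LINT x|M. \<bar>G x - Pe G x\<bar>) \<le> 2 * (LINT x|M. \<bar>G x - F (Pe a) x\<bar>)"
      by (rule dist_proj[OF F_S[OF PaI Pe_measA] Gi])
    also have "(LINT x|M. \<bar>G x - F (Pe a) x\<bar>) \<le> L * (LINT x|M. \<bar>a x - Pe a x\<bar>)"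
      unfolding G_def by (rule F_lip[OF a PaI])
    finally show ?thesis by simp
  qed
  have GG2: "\<bar>h\<bar> * (LINT x|M. \<bar>G x - Pe G x\<bar>) \<le> \<bar>h\<bar> * (2 * L) * (LINT x|M. \<bar>a x - Pe a x\<bar>)"
    using mult_left_mono[OF GG, of "\<bar>h\<bar>"] by (simp add: algebra_simps)
  have "(LINT x|M. \<bar>b x - Pe b x\<bar>) \<le>
      (LINT x|M. \<bar>a x - Pe a x\<bar> + \<bar>h\<bar> * \<bar>G x - Pe G x\<bar> + (\<bar>Dl x\<bar> + \<bar>Pe Dl x\<bar>))"
  proof (rule integral_mono_AE)
    show "integrable M (\<lambda>x. \<bar>b x - Pe b x\<bar>)" using b Pe_int[OF b] by auto
    show "integrable M (\<lambda>x. \<bar>a x - Pe a x\<bar> + \<bar>h\<bar> * \<bar>G x - Pe G x\<bar> + (\<bar>Dl x\<bar> + \<bar>Pe Dl x\<bar>))"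
      using a PaI Gi PGI Di PDI by auto
    show "AE x in M. \<bar>b x - Pe b x\<bar> \<le> \<bar>a x - Pe a x\<bar> + \<bar>h\<bar> * \<bar>G x - Pe G x\<bar> + (\<bar>Dl x\<bar> + \<bar>Pe Dl x\<bar>)"
      using e1 e2 e3
    proof eventually_elim
      case (elim x)
      have "b x - Pe b x = (a x - Pe a x) + h * (G x - Pe G x) + (Dl x - Pe Dl x)"
        using elim unfolding Dl_def by (simp add: algebra_simps)
      also have "\<bar>\<dots>\<bar> \<le> \<bar>a x - Pe a x\<bar> + \<bar>h\<bar> * \<bar>G x - Pe G x\<bar> + (\<bar>Dl x\<bar> + \<bar>Pe Dl x\<bar>)"
        by (simp add: abs_mult[symmetric])
      finally show ?case .
    qed
  qed
  also have "\<dots> = (LINT x|M. \<bar>a x - Pe a x\<bar>) + \<bar>h\<bar> * (LINT x|M. \<bar>G x - Pe G x\<bar>)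
      + ((LINT x|M. \<bar>Dl x\<bar>) + (LINT x|M. \<bar>Pe Dl x\<bar>))"
    using a PaI Gi PGI Di PDI by (simp add: Bochner_Integration.integral_add)
  also have "(LINT x|M. \<bar>Pe Dl x\<bar>) \<le> (LINT x|M. \<bar>Dl x\<bar>)" by (rule Pe_contr[OF Di])
  also have "(LINT x|M. \<bar>Dl x\<bar>) = \<bar>h\<bar> * (LINT x|M. \<bar>(b x - a x) / h - F a x\<bar>)"
  proof -
    have "(\<lambda>x. \<bar>Dl x\<bar>) = (\<lambda>x. \<bar>h\<bar> * \<bar>(b x - a x) / h - F a x\<bar>)"
      using h unfolding Dl_def G_def by (auto simp: abs_mult[symmetric] field_simps)
    then show ?thesis by simp
  qed
  finally show ?thesis using GG2 by (simp add: algebra_simps)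
qed

lemma E2:
  assumes a: "integrable M a" and b: "integrable M b"
  shows "\<bar>(LINT x|M. \<bar>a x - Pe a x\<bar>) - (LINT x|M. \<bar>b x - Pe b x\<bar>)\<bar> \<le> 2 * (LINT x|M. \<bar>a x - b x\<bar>)"
proof -
  have ab: "integrable M (\<lambda>x. a x - b x)" using a b by auto
  have PaI: "integrable M (Pe a)" "integrable M (Pe b)" "integrable M (Pe (\<lambda>x. a x - b x))"
    using Pe_int a b ab by auto
  have "\<bar>(LINT x|M. \<bar>a x - Pe a x\<bar>) - (LINT x|M. \<bar>b x - Pe b x\<bar>)\<bar>
      = \<bar>LINT x|M. \<bar>a x - Pe a x\<bar> - \<bar>b x - Pe b x\<bar>\<bar>"
    using a b PaI by (simp add: Bochner_Integration.integral_diff)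
  also have "\<dots> \<le> (LINT x|M. \<bar>\<bar>a x - Pe a x\<bar> - \<bar>b x - Pe b x\<bar>\<bar>)"
    by (rule integral_abs_bound)
  also have "\<dots> \<le> (LINT x|M. \<bar>a x - b x\<bar> + \<bar>Pe (\<lambda>x. a x - b x) x\<bar>)"
  proof (rule integral_mono_AE)
    show "integrable M (\<lambda>x. \<bar>\<bar>a x - Pe a x\<bar> - \<bar>b x - Pe b x\<bar>\<bar>)" using a b PaI by auto
    show "integrable M (\<lambda>x. \<bar>a x - b x\<bar> + \<bar>Pe (\<lambda>x. a x - b x) x\<bar>)" using a b PaI by auto
    show "AE x in M. \<bar>\<bar>a x - Pe a x\<bar> - \<bar>b x - Pe b x\<bar>\<bar> \<le> \<bar>a x - b x\<bar> + \<bar>Pe (\<lambda>x. a x - b x) x\<bar>"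
      using Pe_diff[OF a b] by eventually_elim auto
  qed
  also have "\<dots> = (LINT x|M. \<bar>a x - b x\<bar>) + (LINT x|M. \<bar>Pe (\<lambda>x. a x - b x) x\<bar>)"
    using a b PaI by (simp add: Bochner_Integration.integral_add)
  also have "(LINT x|M. \<bar>Pe (\<lambda>x. a x - b x) x\<bar>) \<le> (LINT x|M. \<bar>a x - b x\<bar>)" by (rule Pe_contr[OF ab])
  finally show ?thesis by simp
qed

lemma E3:
  assumes a: "integrable M a" and b: "integrable M b" and h: "h \<noteq> 0"
  shows "(LINT x|M. \<bar>b x - a x\<bar>) \<le> \<bar>h\<bar> * (LINT x|M. \<bar>(b x - a x) / h - F a x\<bar>) + \<bar>h\<bar> * (LINT x|M. \<bar>F a x\<bar>)"
proof -
  have Fi: "integrable M (F a)" by (rule F_int[OF a])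
  have "(LINT x|M. \<bar>b x - a x\<bar>) \<le> (LINT x|M. \<bar>h\<bar> * \<bar>(b x - a x) / h - F a x\<bar> + \<bar>h\<bar> * \<bar>F a x\<bar>)"
  proof (rule integral_mono)
    show "integrable M (\<lambda>x. \<bar>b x - a x\<bar>)" using a b by auto
    show "integrable M (\<lambda>x. \<bar>h\<bar> * \<bar>(b x - a x) / h - F a x\<bar> + \<bar>h\<bar> * \<bar>F a x\<bar>)" using a b Fi by auto
    fix x
    have "b x - a x = h * ((b x - a x) / h - F a x) + h * F a x" using h by (simp add: field_simps)
    then have "\<bar>b x - a x\<bar> \<le> \<bar>h * ((b x - a x) / h - F a x)\<bar> + \<bar>h * F a x\<bar>"
      by (metis abs_triangle_ineq)
    then show "\<bar>b x - a x\<bar> \<le> \<bar>h\<bar> * \<bar>(b x - a x) / h - F a x\<bar> + \<bar>h\<bar> * \<bar>F a x\<bar>" by (simp add: abs_mult)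
  qed
  also have "\<dots> = \<bar>h\<bar> * (LINT x|M. \<bar>(b x - a x) / h - F a x\<bar>) + \<bar>h\<bar> * (LINT x|M. \<bar>F a x\<bar>)"
    using a b Fi by (simp add: Bochner_Integration.integral_add)
  finally show ?thesis .
qed

end

context grl begin

lemma invariant: "gds_invariant M W f g S"
  unfolding gds_invariant_def
proof (intro allI impI)
  fix u assume traj: "gds_trajectory M W f g u" and u0: "u 0 \<in> S"
  have ui: "\<And>t. integrable M (u t)" using traj unfolding gds_trajectory_def by auto
  define D where "D t h = (LINT x|M. \<bar>(u (t + h) x - u t x) / h - F (u t) x\<bar>)" for t h
  have lim: "\<And>t. ((D t) \<longlongrightarrow> 0) (at 0)" using traj unfolding gds_trajectory_def D_def[abs_def] by auto
  define \<phi> where "\<phi> t = (LINT x|M. \<bar>u t x - Pe (u t) x\<bar>)" for t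
  have \<phi>nn: "0 \<le> \<phi> t" for t unfolding \<phi>_def by (rule integral_nonneg_AE) auto
  have "\<phi> t \<le> 0" for t
  proof (rule gron_all[where K = "2 * L" and \<phi> = \<phi> and T = t])
    show "0 \<le> 2 * L" using L0 by simp
    have "AE x in M. Pe (u 0) x = u 0 x" by (rule S_Pe[OF u0])
    moreover have "(\<lambda>x. \<bar>u 0 x - Pe (u 0) x\<bar>) \<in> borel_measurable M"
      using ui[of 0] Pe_meas[of "u 0"] by auto
    ultimately have "\<phi> 0 = (LINT x|M. 0)" unfolding \<phi>_def by (intro integral_cong_AE) (auto elim: AE_mp)
    then show "\<phi> 0 \<le> 0" by simp
  next
    fix t
    define c where "c = (LINT x|M. \<bar>F (u t) x\<bar>)"
    have bnd: "norm (\<phi> (t + h) - \<phi> t) \<le> 2 * (\<bar>h\<bar> * D t h + \<bar>h\<bar> * c)" if "h \<noteq> 0" for h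
    proof -
      have "norm (\<phi> (t + h) - \<phi> t) \<le> 2 * (LINT x|M. \<bar>u (t + h) x - u t x\<bar>)"
        unfolding \<phi>_def using E2[OF ui ui] by simp
      also have "(LINT x|M. \<bar>u (t + h) x - u t x\<bar>) \<le> \<bar>h\<bar> * D t h + \<bar>h\<bar> * c"
        unfolding D_def c_def by (rule E3[OF ui ui that])
      finally show ?thesis by simp
    qed
    have "((\<lambda>h. 2 * (\<bar>h\<bar> * D t h + \<bar>h\<bar> * c)) \<longlongrightarrow> 2 * (\<bar>0\<bar> * 0 + \<bar>0\<bar> * c)) (at 0)"
      by (intro tendsto_intros lim)
    then have l0: "((\<lambda>h. 2 * (\<bar>h\<bar> * D t h + \<bar>h\<bar> * c)) \<longlongrightarrow> 0) (at 0)" by simp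
    have "((\<lambda>h. \<phi> (t + h) - \<phi> t) \<longlongrightarrow> 0) (at 0)"
    proof (rule Lim_null_comparison[OF _ l0])
      show "\<forall>\<^sub>F h in at 0. norm (\<phi> (t + h) - \<phi> t) \<le> 2 * (\<bar>h\<bar> * D t h + \<bar>h\<bar> * c)"
        unfolding eventually_at by (rule exI[of _ 1]) (use bnd in auto)
    qed
    then have "((\<lambda>h. \<phi> (t + h) - \<phi> t + \<phi> t) \<longlongrightarrow> 0 + \<phi> t) (at 0)"
      by (intro tendsto_intros)
    then have "((\<lambda>h. \<phi> (t + h)) \<longlongrightarrow> \<phi> t) (at 0)" by simp
    then show "isCont \<phi> t" by (simp add: isCont_def LIM_offset_zero_iff)
  next
    fix t \<epsilon> :: real assume ep: "0 < \<epsilon>"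
    have "eventually (\<lambda>h. D t h < \<epsilon> / 2) (at 0)"
      by (rule order_tendstoD(2)[OF lim]) (use ep in auto)
    then obtain d where d: "d > 0" "\<And>h. h \<noteq> 0 \<Longrightarrow> dist h 0 < d \<Longrightarrow> D t h < \<epsilon> / 2"
      unfolding eventually_at by auto
    show "\<exists>d>0. \<forall>h. h \<noteq> 0 \<and> \<bar>h\<bar> < d \<longrightarrow> \<phi> (t + h) \<le> \<phi> t + \<bar>h\<bar> * (2 * L) * \<phi> t + \<epsilon> * \<bar>h\<bar>"
    proof (intro exI[of _ d] conjI allI impI)
      fix h assume h: "h \<noteq> 0 \<and> \<bar>h\<bar> < d"
      have Dl: "D t h < \<epsilon> / 2" using d(2)[of h] h by auto
      have "\<phi> (t + h) \<le> \<phi> t + \<bar>h\<bar> * (2 * L) * \<phi> t + 2 * \<bar>h\<bar> * D t h"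
        unfolding \<phi>_def D_def using E1[OF ui[of t] ui[of "t + h"], of h] h by simp
      also have "2 * \<bar>h\<bar> * D t h \<le> \<epsilon> * \<bar>h\<bar>"
        using mult_left_mono[OF less_imp_le[OF Dl], of "2 * \<bar>h\<bar>"] by (simp add: mult.commute)
      finally show "\<phi> (t + h) \<le> \<phi> t + \<bar>h\<bar> * (2 * L) * \<phi> t + \<epsilon> * \<bar>h\<bar>" by simp
    qed (use d in auto)
  qed
  then show "u t \<in> S" for t using zero_dist_S[OF ui] unfolding \<phi>_def by auto
qed

end

context gr begin

abbreviation "proj \<equiv> twin_proj M W"
abbreviation "cls \<equiv> twin_classes M W"
abbreviation "Q \<equiv> twin_quot_space M W"
abbreviation "J' \<equiv> twinfree_J M W"
definition rep :: "'a set \<Rightarrow> 'a" where "rep X = (SOME x. x \<in> X)"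

definition QS where "QS = {B. B \<subseteq> cls \<and> proj -` B \<inter> space M \<in> twinfree_sets M W}"

lemma proj_eq: "proj x = {y. twin M W x y}"
  unfolding twin_proj_def twin_rel_def by auto

lemma proj_cls: "x \<in> space M \<Longrightarrow> proj x \<in> cls"
  unfolding twin_classes_def twin_proj_def by (rule quotientI)

lemma cls_E: "X \<in> cls \<Longrightarrow> \<exists>x\<in>space M. X = proj x"
  unfolding twin_classes_def twin_proj_def by (auto elim: quotientE)

lemma rep_twin: "x \<in> space M \<Longrightarrow> twin M W x (rep (proj x))"
proof -
  assume x: "x \<in> space M"
  have "x \<in> proj x" using twin_refl[OF x] proj_eq by auto
  then have "rep (proj x) \<in> proj x" unfolding rep_def by (rule someI)
  then show ?thesis using proj_eq by auto
qed

lemma rep_space: "X \<in> cls \<Longrightarrow> rep X \<in> space M"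
  using cls_E rep_twin twin_space by metis

lemma tf_compl: "s \<in> twinfree_sets M W \<Longrightarrow> space M - s \<in> twinfree_sets M W"
  using twinfree_sigma unfolding sigma_algebra_iff2 by auto

lemma tf_UN: "range B \<subseteq> twinfree_sets M W \<Longrightarrow> (\<Union>i::nat. B i) \<in> twinfree_sets M W"
  using twinfree_sigma unfolding sigma_algebra_iff2 by auto

lemma QS_sigma: "sigma_algebra cls QS"
  unfolding sigma_algebra_iff2
proof (intro conjI allI ballI impI)
  show "QS \<subseteq> Pow cls" unfolding QS_def by auto
  show "{} \<in> QS" unfolding QS_def twinfree_sets_def by auto
  fix s assume s: "s \<in> QS"
  have "proj -` (cls - s) \<inter> space M = space M - (proj -` s \<inter> space M)"
    using proj_cls by auto
  then show "cls - s \<in> QS" using s tf_compl unfolding QS_def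
    by auto
next
  fix B :: "nat \<Rightarrow> 'a set set" assume B: "range B \<subseteq> QS"
  have "proj -` (\<Union>i. B i) \<inter> space M = (\<Union>i. proj -` B i \<inter> space M)" by auto
  moreover have "(\<Union>i. proj -` B i \<inter> space M) \<in> twinfree_sets M W"
    using B tf_UN[of "\<lambda>i. proj -` B i \<inter> space M"]
    unfolding QS_def by auto
  ultimately show "(\<Union>i. B i) \<in> QS" using B unfolding QS_def by auto
qed

lemma Q_eq: "Q = sigma cls QS"
  unfolding twin_quot_space_def QS_def by simp

lemma QS_Pow: "QS \<subseteq> Pow cls" unfolding QS_def by auto

lemma sets_Q: "sets Q = QS"
  unfolding Q_eq using sets_measure_of[OF QS_Pow] sigma_algebra.sigma_sets_eq[OF QS_sigma] by simp

lemma space_Q: "space Q = cls"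
  unfolding Q_eq using space_measure_of_conv QS_Pow by simp

lemma proj_measA: "proj \<in> measurable A Q"
proof (rule measurableI)
  fix x assume "x \<in> space A" then show "proj x \<in> space Q" using proj_cls space_A space_Q by auto
next
  fix B assume "B \<in> sets Q"
  then show "proj -` B \<inter> space A \<in> sets A" using sets_Q sets_A space_A unfolding QS_def by auto
qed

abbreviation "R \<equiv> restr_to_subalg M A"

lemma proj_measR: "proj \<in> measurable R Q"
  by (rule measurable_in_subalg[OF subalg proj_measA])

lemma J'_eq: "J' = distr R Q proj"
  unfolding twinfree_J_def A_def by simp

lemma prob_J': "prob_space J'"
  unfolding J'_eq
  by (rule prob_space.prob_space_distr[OF prob_space_restr_to_subalg[OF subalg prob] proj_measR])

lemma sets_J': "sets J' = sets Q" unfolding J'_eq by simp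
lemma space_J': "space J' = cls" unfolding J'_eq using space_Q by simp

lemma rep_meas: "rep \<in> measurable Q A"
proof (rule measurableI)
  fix X assume "X \<in> space Q" then show "rep X \<in> space A" using rep_space space_Q space_A by auto
next
  fix B assume B: "B \<in> sets A"
  then have B': "B \<in> twinfree_sets M W" using sets_A by auto
  then have Bs: "B \<subseteq> space M" unfolding twinfree_sets_def using sets.sets_into_space by auto
  have "proj -` (rep -` B \<inter> cls) \<inter> space M = B"
  proof (intro equalityI subsetI)
    fix x assume "x \<in> proj -` (rep -` B \<inter> cls) \<inter> space M"
    then have x: "x \<in> space M" "rep (proj x) \<in> B" by auto
    then show "x \<in> B" using B' rep_twin[OF x(1)] twin_sym unfolding twinfree_sets_def by blast
  next
    fix x assume x: "x \<in> B"
    then have xs: "x \<in> space M" using Bs by auto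
    then have "rep (proj x) \<in> B" using B' rep_twin[OF xs] x unfolding twinfree_sets_def by blast
    then show "x \<in> proj -` (rep -` B \<inter> cls) \<inter> space M" using xs proj_cls by auto
  qed
  then show "rep -` B \<inter> space Q \<in> sets Q" using B' unfolding sets_Q space_Q QS_def by auto
qed

lemma int_J:
  fixes k :: "'a set \<Rightarrow> real"
  assumes k: "k \<in> borel_measurable Q"
  shows "integral\<^sup>L J' k = (LINT x|M. k (proj x))"
proof -
  have kA: "(\<lambda>x. k (proj x)) \<in> borel_measurable A" using measurable_comp[OF proj_measA k] by (simp add: comp_def)
  have "integral\<^sup>L J' k = (LINT x|R. k (proj x))" unfolding J'_eq by (rule integral_distr[OF proj_measR k])
  also have "\<dots> = (LINT x|M. k (proj x))" by (rule integral_subalgebra2[OF subalg kA])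
  finally show ?thesis .
qed

lemma integrable_J:
  fixes k :: "'a set \<Rightarrow> real"
  assumes k: "k \<in> borel_measurable Q"
  shows "integrable J' k \<longleftrightarrow> integrable M (\<lambda>x. k (proj x))"
proof -
  have kA: "(\<lambda>x. k (proj x)) \<in> borel_measurable A" using measurable_comp[OF proj_measA k] by (simp add: comp_def)
  have "integrable J' k \<longleftrightarrow> integrable R (\<lambda>x. k (proj x))" unfolding J'_eq by (rule integrable_distr_eq[OF proj_measR k])
  also have "\<dots> \<longleftrightarrow> integrable M (\<lambda>x. k (proj x))"
    using integrable_from_subalg[OF subalg] integrable_in_subalg[OF subalg kA] by blast
  finally show ?thesis .
qed

definition Phi :: "('a \<Rightarrow> real) \<Rightarrow> 'a set \<Rightarrow> real" where "Phi u X = Pe u (rep X)"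

lemma Phi_meas[measurable]: "Phi u \<in> borel_measurable Q"
  unfolding Phi_def[abs_def] using measurable_comp[OF rep_meas Pe_measA] by (simp add: comp_def)

lemma Phi_proj: "x \<in> space M \<Longrightarrow> Phi u (proj x) = Pe u x"
  unfolding Phi_def using Pe_inv[OF rep_twin] by metis

end

context grl begin

abbreviation "MM \<equiv> M \<Otimes>\<^sub>M M"
abbreviation "AA \<equiv> A \<Otimes>\<^sub>M A"
definition CE where "CE = real_cond_exp MM AA (\<lambda>p. W (fst p) (snd p))"
abbreviation "W' \<equiv> twinfree_W M W"

lemma W'_eq: "W' X Y = CE (rep X, rep Y)"
  unfolding twinfree_W_def CE_def A_def rep_def by simp

lemma CE_measAA[measurable]: "CE \<in> borel_measurable AA"
  unfolding CE_def by simp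

lemma CE_meas[measurable]: "CE \<in> borel_measurable MM"
  unfolding CE_def by simp

lemma sub2: "subalgebra MM AA"
  unfolding subalgebra_def
proof
  show "space AA = space MM" by (simp add: space_pair_measure space_A)
  have "{a \<times> b |a b. a \<in> sets A \<and> b \<in> sets A} \<subseteq> {a \<times> b |a b. a \<in> sets M \<and> b \<in> sets M}"
    using subalg unfolding subalgebra_def by auto
  then show "sets AA \<subseteq> sets MM"
    unfolding sets_pair_measure space_A by (rule sigma_sets_mono')
qed

lemma sfs2: "sigma_finite_subalgebra MM AA"
  unfolding sigma_finite_subalgebra_def
proof
  show "subalgebra MM AA" by (rule sub2)
  have "prob_space (restr_to_subalg MM AA)"
    by (rule prob_space_restr_to_subalg[OF sub2 prob_space_pair[OF prob prob]])
  then show "sigma_finite_measure (restr_to_subalg MM AA)"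
    by (simp add: prob_space_imp_sigma_finite)
qed

lemma psf: "pair_sigma_finite M M"
  using prob by (intro pair_sigma_finite.intro) (auto simp: prob_space_imp_sigma_finite)

lemma W'_proj: "x \<in> space M \<Longrightarrow> y \<in> space M \<Longrightarrow> W' (proj x) (proj y) = CE (x, y)"
  unfolding W'_eq using measA_pair_inv[OF CE_measAA twin_sym[OF rep_twin] twin_sym[OF rep_twin]] by metis

lemma W'_meas: "(\<lambda>p. W' (fst p) (snd p)) \<in> borel_measurable (Q \<Otimes>\<^sub>M Q)"
proof -
  have "(\<lambda>p. (rep (fst p), rep (snd p))) \<in> measurable (Q \<Otimes>\<^sub>M Q) AA"
    using rep_meas by measurable
  from measurable_comp[OF this CE_measAA] show ?thesis unfolding W'_eq by (simp add: comp_def)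
qed

lemma W'_sec: "X \<in> cls \<Longrightarrow> W' X \<in> borel_measurable Q"
  using measurable_Pair2[OF W'_meas, of X] space_Q by simp

lemma int_fst: "integrable M (a :: 'a \<Rightarrow> real) \<Longrightarrow> integrable MM (\<lambda>p. a (fst p))"
proof -
  assume a: "integrable M a"
  have "distr MM M fst = M" by (rule prob_space.distr_pair_fst[OF prob])
  then have "integrable (distr MM M fst) a" using a by simp
  then show ?thesis by (intro integrable_distr[of fst MM M a]) auto
qed

lemma int_snd: "integrable M (a :: 'a \<Rightarrow> real) \<Longrightarrow> integrable MM (\<lambda>p. a (snd p))"
proof -
  assume a: "integrable M a"
  have i1: "integrable MM (\<lambda>(x, y). (\<lambda>p. a (fst p)) (y, x))"
    using pair_sigma_finite.integrable_product_swap[OF psf, of "\<lambda>p. a (fst p)"] int_fst[OF a] by blast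
  have eq: "(\<lambda>(x, y). (\<lambda>p. a (fst p)) (y, x)) = (\<lambda>p. a (snd p))" by (auto simp: fun_eq_iff)
  show ?thesis using i1 unfolding eq .
qed

lemma intH:
  assumes a: "integrable M a"
  shows "integrable MM (\<lambda>p. g (a (fst p), a (snd p)))"
proof -
  interpret prob_space MM by (rule prob_space_pair[OF prob prob])
  have [measurable]: "a \<in> borel_measurable M" using a by simp
  show ?thesis
  proof (rule Bochner_Integration.integrable_bound)
    show "integrable MM (\<lambda>p. \<bar>g (0,0)\<bar> + Lg * (\<bar>a (fst p)\<bar> + \<bar>a (snd p)\<bar>))"
      using int_fst[OF a] int_snd[OF a] by auto
    show "(\<lambda>p. g (a (fst p), a (snd p))) \<in> borel_measurable MM" by measurable
    show "AE p in MM. norm (g (a (fst p), a (snd p))) \<le> norm (\<bar>g (0,0)\<bar> + Lg * (\<bar>a (fst p)\<bar> + \<bar>a (snd p)\<bar>))"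
      using lip_bound0[OF lg] Lg0 by (intro AE_I2) auto
  qed
qed

lemma int_bnd_W:
  assumes H: "integrable MM H" and k: "k \<in> borel_measurable MM" and kb: "\<And>p. \<bar>k p\<bar> \<le> \<bar>H p\<bar>"
  shows "integrable MM (\<lambda>p. k p * W (fst p) (snd p))"
proof (rule Bochner_Integration.integrable_bound[OF H])
  show "(\<lambda>p. k p * W (fst p) (snd p)) \<in> borel_measurable MM" using k by measurable
  show "AE p in MM. norm (k p * W (fst p) (snd p)) \<le> norm (H p)"
  proof (rule AE_I2)
    fix p assume "p \<in> space MM"
    then have w: "0 \<le> W (fst p) (snd p)" "W (fst p) (snd p) \<le> 1"
      using Wbnd by (auto simp: space_pair_measure)
    have "\<bar>k p * W (fst p) (snd p)\<bar> \<le> \<bar>k p\<bar> * 1" unfolding abs_mult using w by (intro mult_left_mono) auto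
    then show "norm (k p * W (fst p) (snd p)) \<le> norm (H p)" using kb[of p] by simp
  qed
qed

lemma Gi_measA:
  assumes u: "integrable M u" and uA: "u \<in> borel_measurable A"
  shows "Gi u \<in> borel_measurable A"
proof (rule measA_intro)
  have [measurable]: "u \<in> borel_measurable M" using u by simp
  show "Gi u \<in> borel_measurable M" by measurable
  fix x y assume t: "twin M W x y"
  have xy: "x \<in> space M" "y \<in> space M" using twin_space[OF t] by auto
  have ux: "u x = u y" using measA_inv_real[OF uA t] .
  have "AE z in M. W x z = W y z" using t unfolding twin_def by auto
  then show "Gi u x = Gi u y" unfolding Gi_def ux
    by (intro integral_cong_AE) (use xy in \<open>auto elim: AE_mp\<close>)
qed

end

context grl begin

lemma G_eq:
  fixes a :: "'a \<Rightarrow> real"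
  assumes a: "integrable M a" and aA[measurable]: "a \<in> borel_measurable A"
  shows "AE x in M. (LINT y|M. CE (x, y) * g (a x, a y)) = Gi a x"
proof -
  have aM[measurable]: "a \<in> borel_measurable M" using a by simp
  define H where "H p = g (a (fst p), a (snd p))" for p
  have HA[measurable]: "H \<in> borel_measurable AA" unfolding H_def[abs_def] by measurable
  have HM[measurable]: "H \<in> borel_measurable MM" unfolding H_def[abs_def] by measurable
  have iH: "integrable MM H" unfolding H_def[abs_def] using intH[OF a] by simp
  have iHW: "integrable MM (\<lambda>p. H p * W (fst p) (snd p))" by (rule int_bnd_W[OF iH HM]) auto
  have r1: "integrable MM (\<lambda>p. H p * CE p)"
    using sigma_finite_subalgebra.real_cond_exp_intg(1)[OF sfs2 iHW HA Wmeas] unfolding CE_def .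
  define G1 where "G1 x = (LINT y|M. CE (x, y) * g (a x, a y))" for x
  have G1alt: "G1 = (\<lambda>x. LINT y|M. H (x, y) * CE (x, y))"
    by (simp add: H_def G1_def mult.commute fun_eq_iff)
  have iG1: "integrable M G1"
    unfolding G1alt using pair_sigma_finite.integrable_fst'[OF psf r1] by simp
  have G1A: "G1 \<in> borel_measurable A"
  proof (rule measA_intro)
    show "G1 \<in> borel_measurable M" using iG1 by simp
    fix x x' assume t: "twin M W x x'"
    have ax: "a x = a x'" using measA_inv_real[OF aA t] .
    have "CE (x, y) = CE (x', y)" if "y \<in> space M" for y
      using measA_pair_inv[OF CE_measAA t twin_refl[OF that]] .
    then show "G1 x = G1 x'" unfolding G1_def ax by (intro Bochner_Integration.integral_cong[OF refl]) auto
  qed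
  have iG2: "integrable M (Gi a)" by (rule Gi_int[OF a])
  have G2A: "Gi a \<in> borel_measurable A" by (rule Gi_measA[OF a aA])
  have key: "(LINT x|M. indicator B x * Gi a x) = (LINT x|M. indicator B x * G1 x)" if B: "B \<in> sets A" for B
  proof -
    have BM: "B \<in> sets M" using B subalg unfolding subalgebra_def by auto
    define fB where "fB p = indicator B (fst p) * H p" for p :: "'a \<times> 'a"
    have fBA[measurable]: "fB \<in> borel_measurable AA" unfolding fB_def[abs_def] using B by measurable
    have fBM[measurable]: "fB \<in> borel_measurable MM" unfolding fB_def[abs_def] using BM by measurable
    have ifBW: "integrable MM (\<lambda>p. fB p * W (fst p) (snd p))"
      by (rule int_bnd_W[OF iH fBM]) (auto simp: fB_def indicator_def)
    have ifBCE: "integrable MM (\<lambda>p. fB p * CE p)"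
      using sigma_finite_subalgebra.real_cond_exp_intg(1)[OF sfs2 ifBW fBA Wmeas] unfolding CE_def .
    have c1: "(LINT p|MM. fB p * CE p) = (LINT p|MM. fB p * W (fst p) (snd p))"
      using sigma_finite_subalgebra.real_cond_exp_intg(2)[OF sfs2 ifBW fBA Wmeas] unfolding CE_def .
    have e1: "(LINT y|M. fB (x, y) * W x y) = indicator B x * Gi a x" for x
    proof -
      have "(\<lambda>y. fB (x, y) * W x y) = (\<lambda>y. indicator B x * (W x y * g (a x, a y)))"
        by (auto simp: fB_def H_def fun_eq_iff)
      then show ?thesis unfolding Gi_def by (simp only: integral_mult_right_zero)
    qed
    have e2: "(LINT y|M. fB (x, y) * CE (x, y)) = indicator B x * G1 x" for x
    proof -
      have "(\<lambda>y. fB (x, y) * CE (x, y)) = (\<lambda>y. indicator B x * (CE (x, y) * g (a x, a y)))"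
        by (auto simp: fB_def H_def fun_eq_iff)
      then show ?thesis unfolding G1_def by (simp only: integral_mult_right_zero)
    qed
    have "(LINT x|M. indicator B x * Gi a x) = (LINT x|M. LINT y|M. fB (x, y) * W x y)"
      using e1 by simp
    also have "\<dots> = (LINT p|MM. fB p * W (fst p) (snd p))"
      using pair_sigma_finite.integral_fst'[OF psf ifBW] by simp
    also have "\<dots> = (LINT p|MM. fB p * CE p)" using c1 by simp
    also have "\<dots> = (LINT x|M. LINT y|M. fB (x, y) * CE (x, y))"
      using pair_sigma_finite.integral_fst'[OF psf ifBCE] by simp
    also have "\<dots> = (LINT x|M. indicator B x * G1 x)"
      using e2 by simp
    finally show ?thesis .
  qed
  have "AE x in M. real_cond_exp M A (Gi a) x = G1 x"
  proof (rule sigma_finite_subalgebra.real_cond_exp_charact[OF sfs _ iG2 iG1 G1A])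
    fix B assume "B \<in> sets A"
    then show "(\<integral>x\<in>B. Gi a x \<partial>M) = (\<integral>x\<in>B. G1 x \<partial>M)"
      using key unfolding set_lebesgue_integral_def by simp
  qed
  moreover have "AE x in M. Pe (Gi a) x = Gi a x" by (rule Pe_Fmeas[OF iG2 G2A])
  ultimately show ?thesis unfolding Pe_def G1_def by eventually_elim auto
qed

end

context grl begin

abbreviation "FJ \<equiv> gds_field J' W' f g"

lemma FJ_meas[measurable]:
  assumes w[measurable]: "w \<in> borel_measurable Q"
  shows "FJ w \<in> borel_measurable Q"
proof -
  interpret J: prob_space J' by (rule prob_J')
  have W'm[measurable]: "(\<lambda>p. W' (fst p) (snd p)) \<in> borel_measurable (Q \<Otimes>\<^sub>M Q)" by (rule W'_meas)
  have m1: "(\<lambda>p. W' (fst p) (snd p) * g (w (fst p), w (snd p))) \<in> borel_measurable (Q \<Otimes>\<^sub>M Q)"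
    by measurable
  have eq: "borel_measurable (Q \<Otimes>\<^sub>M Q) = borel_measurable (Q \<Otimes>\<^sub>M J')"
    by (rule measurable_cong_sets[OF sets_pair_measure_cong[OF refl sets_J'[symmetric]] refl])
  have "(\<lambda>p. W' (fst p) (snd p) * g (w (fst p), w (snd p))) \<in> borel_measurable (Q \<Otimes>\<^sub>M J')"
    using m1 unfolding eq .
  then have "(\<lambda>(X, Y). W' X Y * g (w X, w Y)) \<in> borel_measurable (Q \<Otimes>\<^sub>M J')"
    by (simp add: case_prod_beta)
  then have [measurable]: "(\<lambda>X. LINT Y|J'. W' X Y * g (w X, w Y)) \<in> borel_measurable Q"
    by (rule J.borel_measurable_lebesgue_integral)
  show ?thesis unfolding gds_field_def by measurable
qed

lemma FJ_proj:
  assumes x: "x \<in> space M"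
  shows "FJ (Phi v) (proj x) = f (Pe v x, LINT y|M. CE (x, y) * g (Pe v x, Pe v y))"
proof -
  have k: "(\<lambda>Y. W' (proj x) Y * g (Pe v x, Phi v Y)) \<in> borel_measurable Q"
    using W'_sec[OF proj_cls[OF x]] by measurable
  have "(LINT Y|J'. W' (proj x) Y * g (Pe v x, Phi v Y)) = (LINT y|M. W' (proj x) (proj y) * g (Pe v x, Phi v (proj y)))"
    by (rule int_J[OF k])
  also have "\<dots> = (LINT y|M. CE (x, y) * g (Pe v x, Pe v y))"
    by (intro Bochner_Integration.integral_cong[OF refl]) (simp add: W'_proj[OF x] Phi_proj)
  finally show ?thesis unfolding gds_field_def Phi_proj[OF x] by simp
qed

lemma key_AE:
  assumes v: "v \<in> S"
  shows "AE x in M. FJ (Phi v) (proj x) = F v x"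
proof -
  have vi: "integrable M v" using S_int[OF v] .
  have ai: "integrable M (Pe v)" using Pe_int[OF vi] .
  have e1: "AE x in M. (LINT y|M. CE (x, y) * g (Pe v x, Pe v y)) = Gi (Pe v) x"
    by (rule G_eq[OF ai Pe_measA])
  have e2: "AE x in M. F (Pe v) x = F v x" by (rule F_cong[OF ai vi S_Pe[OF v]])
  show ?thesis using e1 e2 AE_space
  proof (eventually_elim)
    case (elim x)
    then show ?case using FJ_proj[OF elim(3)] F_eq[of "Pe v" x] by simp
  qed
qed

lemma FJ_int:
  assumes v: "v \<in> S"
  shows "integrable J' (FJ (Phi v))"
proof -
  have m: "FJ (Phi v) \<in> borel_measurable Q" by measurable
  have mp: "(\<lambda>x. FJ (Phi v) (proj x)) \<in> borel_measurable M"
    using measurable_comp[OF measA_M[OF proj_measA] m] by (simp add: comp_def)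
  have "integrable M (F v)" by (rule F_int[OF S_int[OF v]])
  then have "integrable M (\<lambda>x. FJ (Phi v) (proj x))"
    by (rule integrable_cong_AE_imp[OF _ mp]) (use key_AE[OF v] in \<open>auto elim: AE_mp\<close>)
  then show ?thesis using integrable_J[OF m] by simp
qed

lemma Phi_int:
  assumes v: "v \<in> S"
  shows "integrable J' (Phi v)"
proof -
  have "integrable M (\<lambda>x. Phi v (proj x)) = integrable M (Pe v)"
    by (rule Bochner_Integration.integrable_cong[OF refl]) (auto simp: Phi_proj)
  then have "integrable M (\<lambda>x. Phi v (proj x))" using Pe_int[OF S_int[OF v]] by simp
  then show ?thesis using integrable_J[OF Phi_meas] by simp
qed

lemma Dquot:
  assumes U: "\<And>t. U t \<in> S"
  shows "(LINT X|J'. \<bar>(Phi (U (t + h)) X - Phi (U t) X) / h - FJ (Phi (U t)) X\<bar>)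
       = (LINT x|M. \<bar>(U (t + h) x - U t x) / h - F (U t) x\<bar>)"
proof -
  have m: "(\<lambda>X. \<bar>(Phi (U (t + h)) X - Phi (U t) X) / h - FJ (Phi (U t)) X\<bar>) \<in> borel_measurable Q"
    by measurable
  have "(LINT X|J'. \<bar>(Phi (U (t + h)) X - Phi (U t) X) / h - FJ (Phi (U t)) X\<bar>)
      = (LINT x|M. \<bar>(Phi (U (t + h)) (proj x) - Phi (U t) (proj x)) / h - FJ (Phi (U t)) (proj x)\<bar>)"
    by (rule int_J[OF m])
  also have "\<dots> = (LINT x|M. \<bar>(U (t + h) x - U t x) / h - F (U t) x\<bar>)"
  proof (rule integral_cong_AE)
    have mF: "FJ (Phi (U t)) \<in> borel_measurable Q" by measurable
    have "(\<lambda>x. FJ (Phi (U t)) (proj x)) \<in> borel_measurable M"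
      using measurable_comp[OF measA_M[OF proj_measA] mF] by (simp add: comp_def)
    then show "(\<lambda>x. \<bar>(Phi (U (t + h)) (proj x) - Phi (U t) (proj x)) / h - FJ (Phi (U t)) (proj x)\<bar>) \<in> borel_measurable M"
      using measurable_comp[OF measA_M[OF proj_measA] Phi_meas] by (simp add: comp_def)
    have [measurable]: "U s \<in> borel_measurable M" for s using S_int[OF U] by simp
    show "(\<lambda>x. \<bar>(U (t + h) x - U t x) / h - F (U t) x\<bar>) \<in> borel_measurable M" by measurable
    show "AE x in M. \<bar>(Phi (U (t + h)) (proj x) - Phi (U t) (proj x)) / h - FJ (Phi (U t)) (proj x)\<bar>
        = \<bar>(U (t + h) x - U t x) / h - F (U t) x\<bar>"
      using S_Pe[OF U, of "t + h"] S_Pe[OF U, of t] key_AE[OF U, of t] AE_space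
      by eventually_elim (auto simp: Phi_proj)
  qed
  finally show ?thesis .
qed

lemma isometric: "gds_isometric M W S J' W' f g"
  unfolding gds_isometric_def
proof (intro exI[of _ Phi] conjI ballI allI impI)
  fix u assume "u \<in> S" then show "integrable J' (Phi u)" by (rule Phi_int)
next
  fix u v assume u: "u \<in> S" and v: "v \<in> S"
  have m: "(\<lambda>X. \<bar>Phi u X - Phi v X\<bar>) \<in> borel_measurable Q" by measurable
  have "l1dist J' (Phi u) (Phi v) = (LINT x|M. \<bar>Phi u (proj x) - Phi v (proj x)\<bar>)"
    unfolding l1dist_def by (rule int_J[OF m])
  also have "\<dots> = (LINT x|M. \<bar>u x - v x\<bar>)"
  proof (rule integral_cong_AE)
    show "(\<lambda>x. \<bar>Phi u (proj x) - Phi v (proj x)\<bar>) \<in> borel_measurable M"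
      using measurable_comp[OF measA_M[OF proj_measA] m] by (simp add: comp_def)
    show "(\<lambda>x. \<bar>u x - v x\<bar>) \<in> borel_measurable M" using S_int[OF u] S_int[OF v] by auto
    show "AE x in M. \<bar>Phi u (proj x) - Phi v (proj x)\<bar> = \<bar>u x - v x\<bar>"
      using S_Pe[OF u] S_Pe[OF v] AE_space by eventually_elim (auto simp: Phi_proj)
  qed
  finally show "l1dist J' (Phi u) (Phi v) = l1dist M u v" unfolding l1dist_def .
next
  fix w :: "'a set \<Rightarrow> real" assume w: "integrable J' w"
  then have wJ: "w \<in> borel_measurable J'" by simp
  have wQ[measurable]: "w \<in> borel_measurable Q"
  proof -
    have eq: "borel_measurable J' = borel_measurable Q" by (rule measurable_cong_sets[OF sets_J' refl])
    show ?thesis using wJ unfolding eq .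
  qed
  define u where "u x = w (proj x)" for x
  have uA: "u \<in> borel_measurable A"
    unfolding u_def using measurable_comp[OF proj_measA wQ] by (simp add: comp_def)
  have ui: "integrable M u" unfolding u_def using w integrable_J[of w] wQ by simp
  have uS: "u \<in> S" by (rule measA_S[OF ui uA])
  have m: "(\<lambda>X. \<bar>Phi u X - w X\<bar>) \<in> borel_measurable Q" by measurable
  have "(LINT X|J'. \<bar>Phi u X - w X\<bar>) = (LINT x|M. \<bar>Phi u (proj x) - w (proj x)\<bar>)"
    by (rule int_J[OF m])
  also have "\<dots> = (LINT x|M. 0)"
  proof (rule integral_cong_AE)
    show "(\<lambda>x. \<bar>Phi u (proj x) - w (proj x)\<bar>) \<in> borel_measurable M"
      using measurable_comp[OF measA_M[OF proj_measA] m] by (simp add: comp_def)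
    show "AE x in M. \<bar>Phi u (proj x) - w (proj x)\<bar> = 0"
      using S_Pe[OF uS] AE_space by eventually_elim (auto simp: Phi_proj u_def)
  qed simp
  finally have z: "(LINT X|J'. \<bar>Phi u X - w X\<bar>) = 0" by simp
  have "integrable J' (\<lambda>X. \<bar>Phi u X - w X\<bar>)" using Phi_int[OF uS] w by auto
  then have "AE X in J'. \<bar>Phi u X - w X\<bar> = 0"
    using integral_nonneg_eq_0_iff_AE[of J' "\<lambda>X. \<bar>Phi u X - w X\<bar>"] z by auto
  then show "\<exists>u\<in>S. AE y in J'. Phi u y = w y" using uS by (intro bexI[of _ u]) (auto elim: AE_mp)
next
  fix U :: "real \<Rightarrow> 'a \<Rightarrow> real" assume U: "\<forall>t. U t \<in> S"
  then have U': "\<And>t. U t \<in> S" by auto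
  show "gds_trajectory M W f g U = gds_trajectory J' W' f g (\<lambda>t. Phi (U t))"
  proof -
    have eqD: "(\<lambda>h. LINT X|J'. \<bar>(Phi (U (t + h)) X - Phi (U t) X) / h - FJ (Phi (U t)) X\<bar>)
       = (\<lambda>h. LINT x|M. \<bar>(U (t + h) x - U t x) / h - F (U t) x\<bar>)" for t
      using Dquot[where U=U, OF U'] by (intro ext) blast
    show ?thesis
      unfolding gds_trajectory_def eqD
      using S_int[OF U'] F_int[OF S_int[OF U']] Phi_int[OF U'] FJ_int[OF U'] by simp
  qed
qed

end

theorem proposition4p4:
  fixes M :: "'a measure" and W :: "'a \<Rightarrow> 'a \<Rightarrow> real"
    and f g :: "real \<times> real \<Rightarrow> real"
  assumes "\<exists>C. C-lipschitz_on UNIV f"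
    and "\<exists>C. C-lipschitz_on UNIV g"
    and "graphon M W"
  shows "l1_linear_subspace M (twin_const_L1 M W)
       \<and> l1_closed M (twin_const_L1 M W)
       \<and> gds_invariant M W f g (twin_const_L1 M W)
       \<and> gds_isometric M W (twin_const_L1 M W) (twinfree_J M W) (twinfree_W M W) f g"
proof -
  obtain Lf where lf: "Lf-lipschitz_on UNIV f" using assms(1) by auto
  obtain Lg where lg: "Lg-lipschitz_on UNIV g" using assms(2) by auto
  interpret grl M W f g Lf Lg
    by (unfold_locales) (use assms(3) lf lg in auto)
  show ?thesis using S_linear S_closed invariant isometric by auto
qed

end
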